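(* Let $f,\rho\in\mathcal{C}^1(SE(2))$ be supported in $\mathbb{D}_{1/4}^\circ$, with $\rho$ radial in translations. Then there is a constant $C>0$ (depending only on $f$ and $\rho$) such that for all $\mathbf{K}\in\mathbb{N}^3$, with $\mathbf{L}:=2\mathbf{K}+1$, and all $\mathbf{k}\in\mathbb{Z}^3$ with $|\mathbf{k}|\le\mathbf{K}$, \[ \left|\widehat{f\star\rho}[\mathbf{k};\mathbf{L}]-\widehat{f}[\mathbf{k};\mathbf{L}]\,\widehat{\rho}[\mathbf{k};\mathbf{L}]\right|\le\frac{C}{\min(\mathbf{K})}. \] In particular, for $K\in\mathbb{N}$ and $\|\mathbf{k}\|_\infty\le K$, $\left|\widehat{f\star\rho}[\mathbf{k};2K+1]-\widehat{f}[\mathbf{k};2K+1]\widehat{\rho}[\mathbf{k};2K+1]\right|\le C/K$.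
   Context: $SE(2)=\mathbb{R}^2\rtimes SO(2)$ with group law $(\mathbf{x},\mathbf{R})\circ(\mathbf{x}',\mathbf{R}')=(\mathbf{x}+\mathbf{R}\mathbf{x}',\mathbf{R}\mathbf{R}')$, elements parametrized by $(x,y,\theta)\in\mathbb{R}^2\times[0,2\pi)$, Haar measure $\frac{1}{2\pi}\mathrm{d}x\,\mathrm{d}y\,\mathrm{d}\theta$; convolution $(f_1\star f_2)(\mathbf{h})=\int_{SE(2)}f_1(\mathbf{g})f_2(\mathbf{g}^{-1}\circ\mathbf{h})\,\mathrm{d}\mathbf{g}$. $\mathcal{C}^1(SE(2))$: continuously differentiable in $(x,y,\theta)$, $2\pi$-periodic in $\theta$. $\mathbb{D}_a^\circ=\{(\mathbf{x},\mathbf{R}):\|\mathbf{x}\|_2<a\}$. $\rho$ radial in translations: $\rho(\mathbf{x},\mathbf{R})=\rho(\mathbf{S}\mathbf{x},\mathbf{R})$ for all $\mathbf{x}\in\mathbb{R}^2$, $\mathbf{R},\mathbf{S}\in SO(2)$. For $\mathbf{k}\in\mathbb{Z}^3$, $\phi_{\mathbf{k}}(x,y,\theta)=e^{2\pi\mathrm{i}(k_1x+k_2y)}e^{\mathrm{i}k_3\theta}$. For $\mathbf{L}=(L_{\mathrm x},L_{\mathrm y},L_{\mathrm r})\in\mathbb{N}^3$, grid points $x_i=-\tfrac12+\tfrac{i-1}{L_{\mathrm x}}$, $y_j=-\tfrac12+\tfrac{j-1}{L_{\mathrm y}}$, $\theta_l=\tfrac{2\pi(l-1)}{L_{\mathrm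 r}}$, and for a function $g$ on $SE(2)$, $\widehat{g}[\mathbf{k};\mathbf{L}]=\frac{1}{L_{\mathrm x}L_{\mathrm y}L_{\mathrm r}}\sum_{i,j,l}g(x_i,y_j,\theta_l)\overline{\phi_{\mathbf{k}}(x_i,y_j,\theta_l)}$ (scalar $L$ means $(L,L,L)$). For $\mathbf{K}\in\mathbb{N}^3$: $2\mathbf{K}+1$ componentwise, $\min(\mathbf{K})$ smallest entry, $|\mathbf{k}|\le\mathbf{K}$ componentwise. *)

theory Defs
  imports "HOL-Analysis.Analysis"
begin

text \<open>Functions on SE(2) are represented in the coordinates (x, y, theta) as maps
  real \<times> real \<times> real \<Rightarrow> real.\<close>

type_synonym se2fun = "real \<times> real \<times> real \<Rightarrow> real"

definition C1_SE2 :: "se2fun \<Rightarrow> bool" where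
  "C1_SE2 f \<longleftrightarrow>
     (\<exists>D :: real \<times> real \<times> real \<Rightarrow> ((real \<times> real \<times> real) \<Rightarrow>\<^sub>L real).
        (\<forall>p. (f has_derivative blinfun_apply (D p)) (at p)) \<and> continuous_on UNIV D)
     \<and> (\<forall>x y t. f (x, y, t + 2 * pi) = f (x, y, t))"

definition supported_in_disc :: "real \<Rightarrow> se2fun \<Rightarrow> bool" where
  "supported_in_disc a f \<longleftrightarrow>
     closure {p. f p \<noteq> 0} \<subseteq> {(x, y, t). sqrt (x\<^sup>2 + y\<^sup>2) < a}"

definition radial_in_translations :: "se2fun \<Rightarrow> bool" where
  "radial_in_translations \<rho> \<longleftrightarrow>
     (\<forall>x y t \<phi>. \<rho> (cos \<phi> * x - sin \<phi> * y, sin \<phi> * x + cos \<phi> * y, t) = \<rho> (x, y, t))"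

text \<open>Convolution with respect to the Haar measure (1/2pi) dx dy dtheta:
  for g = (x, R_t), h = (a, R_s) one has g^{-1} h = (R_t^{-1}(a - x), R_{s - t}).\<close>
definition se2_conv :: "se2fun \<Rightarrow> se2fun \<Rightarrow> se2fun" where
  "se2_conv f1 f2 = (\<lambda>(a, b, s).
     (1 / (2 * pi)) * integral (UNIV \<times> UNIV \<times> {0..2 * pi})
       (\<lambda>(x, y, t). f1 (x, y, t) *
          f2 (cos t * (a - x) + sin t * (b - y), - sin t * (a - x) + cos t * (b - y), s - t)))"

definition phi_k :: "int \<Rightarrow> int \<Rightarrow> int \<Rightarrow> real \<Rightarrow> real \<Rightarrow> real \<Rightarrow> complex" where
  "phi_k k1 k2 k3 x y t =
     exp (2 * pi * \<i> * of_real (of_int k1 * x + of_int k2 * y)) * exp (\<i> * of_real (of_int k3 * t))"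

text \<open>Discrete Fourier coefficient on the grid; indices i = 0..<Lx correspond to the paper's
  i = 1..Lx, i.e. x_i = -1/2 + i/Lx etc.\<close>
definition dft_coeff :: "se2fun \<Rightarrow> int \<Rightarrow> int \<Rightarrow> int \<Rightarrow> nat \<Rightarrow> nat \<Rightarrow> nat \<Rightarrow> complex" where
  "dft_coeff g k1 k2 k3 Lx Ly Lr =
     (1 / of_nat (Lx * Ly * Lr)) *
     (\<Sum>i<Lx. \<Sum>j<Ly. \<Sum>l<Lr.
        let x = - 1 / 2 + real i / real Lx;
            y = - 1 / 2 + real j / real Ly;
            t = 2 * pi * real l / real Lr
        in of_real (g (x, y, t)) * cnj (phi_k k1 k2 k3 x y t))"

end

theory Submission
  imports Defs
begin


lemma lip_cont:
  fixes u :: "real \<Rightarrow> real"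
  assumes L: "\<And>s s'. \<bar>u s - u s'\<bar> \<le> \<Lambda> * \<bar>s - s'\<bar>"
  shows "continuous_on S u" and "\<Lambda> \<ge> 0"
proof -
  show "\<Lambda> \<ge> 0" using L[of 1 0] abs_ge_zero[of "u 1 - u 0"] by simp
  then have "\<Lambda>-lipschitz_on S u" unfolding lipschitz_on_def dist_real_def using L by auto
  then show "continuous_on S u" by (rule lipschitz_on_continuous_on)
qed

lemma riemann1:
  fixes u :: "real \<Rightarrow> real"
  assumes L: "\<And>s s'. \<bar>u s - u s'\<bar> \<le> \<Lambda> * \<bar>s - s'\<bar>" and h: "h > 0"
  shows "\<bar>integral {a..a + real n * h} u - h * (\<Sum>i<n. u (a + real i * h))\<bar> \<le> real n * h * (\<Lambda> * h)"
proof (induction n)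
  case 0
  then show ?case by simp
next
  case (Suc n)
  have cont: "continuous_on S u" for S using lip_cont[OF L] by blast
  have L0: "\<Lambda> \<ge> 0" using lip_cont[OF L] by blast
  let ?c = "a + real n * h"
  have e: "a + real (Suc n) * h = ?c + h" by (simp add: algebra_simps)
  have comb: "integral {a..?c} u + integral {?c..?c + h} u = integral {a..a + real (Suc n) * h} u"
    unfolding e
    apply (rule Henstock_Kurzweil_Integration.integral_combine)
    using h apply simp
    using h apply simp
    by (intro integrable_continuous_real cont)
  have "integral {?c..?c + h} u - h * u ?c = integral {?c..?c+h} (\<lambda>s. u s - u ?c)"
    using h by (subst integral_diff) (auto intro!: integrable_continuous_real cont simp: integral_const_real)
  also have "\<bar>\<dots>\<bar> \<le> (\<Lambda> * h) * ((?c + h) - ?c)"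
    using integral_bound[of ?c "?c+h" "\<lambda>s. u s - u ?c" "\<Lambda> * h"] h
    apply simp
    apply (rule integral_bound[of ?c "?c+h" "\<lambda>s. u s - u ?c" "\<Lambda> * h", simplified])
    using h apply simp
     apply (intro continuous_intros cont)
    apply (rule order_trans[OF L]) using L0 by (auto intro: mult_left_mono)
  finally have last: "\<bar>integral {?c..?c + h} u - h * u ?c\<bar> \<le> \<Lambda> * h * h" by simp
  have "integral {a..a + real (Suc n) * h} u - h * (\<Sum>i<Suc n. u (a + real i * h))
     = (integral {a..?c} u - h * (\<Sum>i<n. u (a + real i * h))) + (integral {?c..?c + h} u - h * u ?c)"
    using comb by (simp add: algebra_simps)
  then have "\<bar>integral {a..a + real (Suc n) * h} u - h * (\<Sum>i<Suc n. u (a + real i * h))\<bar>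
     \<le> real n * h * (\<Lambda> * h) + \<Lambda> * h * h"
    using Suc.IH last by linarith
  also have "\<dots> = real (Suc n) * h * (\<Lambda> * h)" by (simp add: algebra_simps)
  finally show ?case .
qed


lemma int_diff_bound:
  fixes u v :: "real \<Rightarrow> real"
  assumes "continuous_on {a..b} u" "continuous_on {a..b} v" "a \<le> b" "\<And>t. \<bar>u t - v t\<bar> \<le> e"
  shows "\<bar>integral {a..b} u - integral {a..b} v\<bar> \<le> (b - a) * e"
proof -
  have "integral {a..b} u - integral {a..b} v = integral {a..b} (\<lambda>t. u t - v t)"
    using assms by (subst integral_diff) (auto intro: integrable_continuous_real)
  also have "\<bar>\<dots>\<bar> \<le> e * (b - a)"
    using integral_bound[of a b "\<lambda>t. u t - v t" e] assms by (auto intro: continuous_intros)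
  finally show ?thesis by (simp add: mult.commute)
qed

lemma lip3_cont:
  fixes g :: "real \<times> real \<times> real \<Rightarrow> real"
  assumes L: "\<And>x y t x' y' t'. \<bar>g (x,y,t) - g (x',y',t')\<bar> \<le> \<Lambda> * (\<bar>x-x'\<bar> + \<bar>y-y'\<bar> + \<bar>t-t'\<bar>)"
  shows "continuous_on S g" "\<Lambda> \<ge> 0"
proof -
  show L0: "\<Lambda> \<ge> 0" using L[of 1 0 0 0 0 0] abs_ge_zero[of "g (1,0,0) - g (0,0,0)"] by simp
  have "(3*\<Lambda>)-lipschitz_on S g"
    unfolding lipschitz_on_def
  proof (intro conjI ballI)
    fix p q assume "p \<in> S" "q \<in> S"
    obtain x y t where p: "p = (x,y,t)" by (cases p) auto
    obtain x' y' t' where q: "q = (x',y',t')" by (cases q) auto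
    have d: "dist p q = norm (x - x', y - y', t - t')" by (simp add: p q dist_norm)
    have 1: "\<bar>x-x'\<bar> \<le> dist p q" unfolding d using norm_fst_le[of "x-x'" "(y-y',t-t')"] by simp
    have 2: "\<bar>y-y'\<bar> \<le> dist p q" unfolding d using norm_fst_le[of "y-y'" "t-t'"] norm_snd_le[where x="x-x'" and y="(y-y',t-t')"] by simp
    have 3: "\<bar>t-t'\<bar> \<le> dist p q" unfolding d using norm_snd_le[where x="y-y'" and y="t-t'"] norm_snd_le[where x="x-x'" and y="(y-y',t-t')"] by simp
    have "dist (g p) (g q) \<le> \<Lambda> * (\<bar>x-x'\<bar> + \<bar>y-y'\<bar> + \<bar>t-t'\<bar>)" using L by (simp add: p q dist_real_def)
    also have "\<dots> \<le> \<Lambda> * (3 * dist p q)" using 1 2 3 L0 by (intro mult_left_mono) auto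
    finally show "dist (g p) (g q) \<le> 3 * \<Lambda> * dist p q" by simp
  qed (use L0 in simp)
  then show "continuous_on S g" by (rule lipschitz_on_continuous_on)
qed


lemma absmul: "(c::real) \<ge> 0 \<Longrightarrow> \<bar>c*a - c*b\<bar> = c*\<bar>a-b\<bar>"
  by (simp add: abs_mult right_diff_distrib[symmetric])

lemma riemann3:
  fixes g :: "real \<times> real \<times> real \<Rightarrow> real"
  assumes L: "\<And>x y t x' y' t'. \<bar>g (x,y,t) - g (x',y',t')\<bar> \<le> \<Lambda> * (\<bar>x-x'\<bar> + \<bar>y-y'\<bar> + \<bar>t-t'\<bar>)"
    and h1: "h1 > 0" and h2: "h2 > 0" and h3: "h3 > 0"
  shows "\<bar>integral (cbox (a1,a2,a3) (a1 + real n1*h1, a2 + real n2*h2, a3 + real n3*h3)) g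
     - h1*h2*h3*(\<Sum>i<n1. \<Sum>j<n2. \<Sum>l<n3. g (a1 + real i*h1, a2 + real j*h2, a3 + real l*h3))\<bar>
     \<le> (real n1*h1)*(real n2*h2)*(real n3*h3)*\<Lambda>*(h1+h2+h3)"
proof -
  define b1 where "b1 = a1 + real n1*h1"
  define b2 where "b2 = a2 + real n2*h2"
  define b3 where "b3 = a3 + real n3*h3"
  have L0: "\<Lambda> \<ge> 0" and gc: "\<And>S. continuous_on S g" using lip3_cont[OF L] by auto
  have ab1: "a1 \<le> b1" "b1 - a1 = real n1*h1" using h1 by (auto simp: b1_def)
  have ab2: "a2 \<le> b2" "b2 - a2 = real n2*h2" using h2 by (auto simp: b2_def)
  have ab3: "a3 \<le> b3" "b3 - a3 = real n3*h3" using h3 by (auto simp: b3_def)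
  define G2 where "G2 x y = integral {a3..b3} (\<lambda>t. g (x,y,t))" for x y
  define G1 where "G1 x = integral {a2..b2} (\<lambda>y. G2 x y)" for x
  have ct: "continuous_on S (\<lambda>t. g (x,y,t))" for S x y
    by (rule continuous_on_compose2[OF gc[of UNIV]]) (auto intro!: continuous_intros)
  have Lt: "\<bar>g (x,y,t) - g (x,y,t')\<bar> \<le> \<Lambda> * \<bar>t - t'\<bar>" for x y t t' using L[of x y t x y t'] by simp
  have G2d: "\<bar>G2 x y - G2 x' y'\<bar> \<le> (b3 - a3) * (\<Lambda> * (\<bar>x-x'\<bar> + \<bar>y-y'\<bar>))" for x y x' y'
    unfolding G2_def apply (rule int_diff_bound[OF ct ct ab3(1)])
    subgoal for t using L[of x y t x' y' t] by simp
    done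
  have Ly: "\<bar>G2 x y - G2 x y'\<bar> \<le> ((b3 - a3) * \<Lambda>) * \<bar>y - y'\<bar>" for x y y'
    using G2d[of x y x y'] by simp
  have cy: "continuous_on S (\<lambda>y. G2 x y)" for S x using lip_cont(1)[OF Ly] .
  have Lx: "\<bar>G1 x - G1 x'\<bar> \<le> ((b2 - a2) * ((b3 - a3) * \<Lambda>)) * \<bar>x - x'\<bar>" for x x'
  proof -
    have "\<bar>G1 x - G1 x'\<bar> \<le> (b2 - a2) * ((b3 - a3) * (\<Lambda> * \<bar>x - x'\<bar>))"
      unfolding G1_def apply (rule int_diff_bound[OF cy cy ab2(1)])
      subgoal for y using G2d[of x y x' y] by simp
      done
    then show ?thesis by (simp add: algebra_simps)
  qed
  have fub: "integral (cbox (a1,a2,a3) (b1,b2,b3)) g = integral {a1..b1} G1"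
  proof -
    have "integral (cbox (a1,a2,a3) (b1,b2,b3)) g
        = integral (cbox a1 b1) (\<lambda>x. integral (cbox (a2,a3) (b2,b3)) (\<lambda>yt. g (x,yt)))"
      by (rule integral_prod_continuous) (rule gc)
    also have "\<dots> = integral {a1..b1} G1"
    proof -
      have inner: "integral (cbox (a2,a3) (b2,b3)) (\<lambda>yt. g (x,yt)) = G1 x" for x
      proof -
        have "continuous_on (cbox (a2,a3) (b2,b3)) (\<lambda>yt. g (x,yt))"
          by (rule continuous_on_compose2[OF gc[of UNIV]]) (auto intro!: continuous_intros)
        then have "integral (cbox (a2,a3) (b2,b3)) (\<lambda>yt. g (x,yt))
           = integral (cbox a2 b2) (\<lambda>y. integral (cbox a3 b3) (\<lambda>t. g (x,y,t)))"
          by (rule integral_prod_continuous)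
        then show ?thesis by (simp add: G1_def G2_def cbox_interval)
      qed
      show ?thesis unfolding inner by (simp add: cbox_interval)
    qed
    finally show ?thesis .
  qed
  have E1: "\<bar>integral {a1..b1} G1 - h1 * (\<Sum>i<n1. G1 (a1 + real i * h1))\<bar> \<le> real n1 * h1 * (((b2 - a2) * ((b3 - a3) * \<Lambda>)) * h1)"
    unfolding b1_def by (rule riemann1[OF Lx h1])
  have E2: "\<bar>G1 x - h2 * (\<Sum>j<n2. G2 x (a2 + real j * h2))\<bar> \<le> real n2 * h2 * (((b3 - a3) * \<Lambda>) * h2)" for x
    unfolding G1_def b2_def by (rule riemann1[OF Ly h2])
  have E3: "\<bar>G2 x y - h3 * (\<Sum>l<n3. g (x, y, a3 + real l * h3))\<bar> \<le> real n3 * h3 * (\<Lambda> * h3)" for x y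
    unfolding G2_def b3_def by (rule riemann1[OF Lt h3])
  define S where "S i j = (\<Sum>l<n3. g (a1 + real i*h1, a2 + real j*h2, a3 + real l*h3))" for i j
  define V where "V = (real n1*h1)*(real n2*h2)*(real n3*h3)"
  have "\<bar>(\<Sum>i<n1. G1 (a1 + real i * h1)) - h2 * h3 * (\<Sum>i<n1. \<Sum>j<n2. S i j)\<bar>
        \<le> (\<Sum>i<n1. \<bar>G1 (a1 + real i * h1) - h2 * h3 * (\<Sum>j<n2. S i j)\<bar>)"
    by (simp add: sum_subtractf[symmetric] sum_distrib_left sum_abs)
  also have "\<dots> \<le> (\<Sum>i<n1. real n2 * h2 * (((b3 - a3) * \<Lambda>) * h2) + real n2 * h2 * (real n3 * h3 * (\<Lambda> * h3)))"
  proof (rule sum_mono)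
    fix i
    let ?x = "a1 + real i * h1"
    have "\<bar>(\<Sum>j<n2. G2 ?x (a2 + real j * h2)) - h3 * (\<Sum>j<n2. S i j)\<bar>
        \<le> (\<Sum>j<n2. \<bar>G2 ?x (a2 + real j * h2) - h3 * S i j\<bar>)"
      by (simp add: sum_subtractf[symmetric] sum_distrib_left sum_abs)
    also have "\<dots> \<le> (\<Sum>j<n2. real n3 * h3 * (\<Lambda> * h3))"
      by (rule sum_mono) (simp add: S_def E3)
    finally have "\<bar>(\<Sum>j<n2. G2 ?x (a2 + real j * h2)) - h3 * (\<Sum>j<n2. S i j)\<bar> \<le> real n2 * (real n3 * h3 * (\<Lambda> * h3))"
      by simp
    then have "h2 * \<bar>(\<Sum>j<n2. G2 ?x (a2 + real j * h2)) - h3 * (\<Sum>j<n2. S i j)\<bar> \<le> h2 * (real n2 * (real n3 * h3 * (\<Lambda> * h3)))"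
      using h2 by (intro mult_left_mono) auto
    then have "\<bar>h2 * (\<Sum>j<n2. G2 ?x (a2 + real j * h2)) - h2 * (h3 * (\<Sum>j<n2. S i j))\<bar> \<le> real n2 * h2 * (real n3 * h3 * (\<Lambda> * h3))"
      using h2 by (subst absmul) (auto simp: algebra_simps)
    then have "\<bar>h2 * (\<Sum>j<n2. G2 ?x (a2 + real j * h2)) - h2 * h3 * (\<Sum>j<n2. S i j)\<bar> \<le> real n2 * h2 * (real n3 * h3 * (\<Lambda> * h3))"
      by (simp add: mult.assoc)
    then show "\<bar>G1 ?x - h2 * h3 * (\<Sum>j<n2. S i j)\<bar> \<le> real n2 * h2 * (((b3 - a3) * \<Lambda>) * h2) + real n2 * h2 * (real n3 * h3 * (\<Lambda> * h3))"
      using E2[of ?x] by linarith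
  qed
  finally have A: "\<bar>(\<Sum>i<n1. G1 (a1 + real i * h1)) - h2 * h3 * (\<Sum>i<n1. \<Sum>j<n2. S i j)\<bar>
      \<le> real n1 * (real n2 * h2 * (((b3 - a3) * \<Lambda>) * h2) + real n2 * h2 * (real n3 * h3 * (\<Lambda> * h3)))"
    by simp
  have "h1 * \<bar>(\<Sum>i<n1. G1 (a1 + real i * h1)) - h2 * h3 * (\<Sum>i<n1. \<Sum>j<n2. S i j)\<bar>
      \<le> h1 * (real n1 * (real n2 * h2 * (((b3 - a3) * \<Lambda>) * h2) + real n2 * h2 * (real n3 * h3 * (\<Lambda> * h3))))"
    using h1 A by (intro mult_left_mono) auto
  also have "\<dots> = V * \<Lambda> * (h2 + h3)" unfolding V_def ab3(2) by (simp add: algebra_simps)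
  finally have A': "\<bar>h1 * (\<Sum>i<n1. G1 (a1 + real i * h1)) - h1 * h2 * h3 * (\<Sum>i<n1. \<Sum>j<n2. S i j)\<bar> \<le> V * \<Lambda> * (h2 + h3)"
    using h1 absmul[of h1 "(\<Sum>i<n1. G1 (a1 + real i * h1))" "h2 * h3 * (\<Sum>i<n1. \<Sum>j<n2. S i j)"] by (simp add: mult.assoc)
  have E1': "\<bar>integral {a1..b1} G1 - h1 * (\<Sum>i<n1. G1 (a1 + real i * h1))\<bar> \<le> V * \<Lambda> * h1"
    using E1 unfolding V_def ab2(2) ab3(2) by (simp add: algebra_simps)
  have "\<bar>integral {a1..b1} G1 - h1 * h2 * h3 * (\<Sum>i<n1. \<Sum>j<n2. S i j)\<bar> \<le> V * \<Lambda> * h1 + V * \<Lambda> * (h2 + h3)"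
    using E1' A' by linarith
  then have "\<bar>integral (cbox (a1,a2,a3) (b1,b2,b3)) g - h1 * h2 * h3 * (\<Sum>i<n1. \<Sum>j<n2. S i j)\<bar> \<le> V * \<Lambda> * (h1 + h2 + h3)"
    unfolding fub by (simp add: algebra_simps)
  then show ?thesis unfolding b1_def b2_def b3_def S_def V_def by (simp add: algebra_simps)
qed


lemma supp_small:
  assumes "supported_in_disc (1/4) f" "f (x,y,t) \<noteq> 0"
  shows "\<bar>x\<bar> < 1/4" "\<bar>y\<bar> < 1/4"
proof -
  have "(x,y,t) \<in> {p. f p \<noteq> 0}" using assms(2) by simp
  then have "(x,y,t) \<in> closure {p. f p \<noteq> 0}" by (meson closure_subset subsetD)
  then have s: "sqrt (x\<^sup>2 + y\<^sup>2) < 1/4" using assms(1) unfolding supported_in_disc_def by blast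
  have "\<bar>x\<bar> \<le> sqrt (x\<^sup>2 + y\<^sup>2)" using real_sqrt_le_mono[of "x\<^sup>2" "x\<^sup>2 + y\<^sup>2"] by simp
  then show "\<bar>x\<bar> < 1/4" using s by linarith
  have "\<bar>y\<bar> \<le> sqrt (x\<^sup>2 + y\<^sup>2)" using real_sqrt_le_mono[of "y\<^sup>2" "x\<^sup>2 + y\<^sup>2"] by simp
  then show "\<bar>y\<bar> < 1/4" using s by linarith
qed

lemma per_nat:
  assumes "\<And>x y t. f (x, y, t + 2 * pi) = f (x, y, t)"
  shows "f (x, y, t + 2 * pi * real n) = f (x, y, t)"
proof (induction n arbitrary: t)
  case 0 then show ?case by simp
next
  case (Suc n)
  have "f (x, y, t + 2 * pi * real (Suc n)) = f (x, y, (t + 2 * pi * real n) + 2 * pi)"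
    by (simp add: algebra_simps)
  also have "\<dots> = f (x, y, t)" using assms Suc.IH by simp
  finally show ?case .
qed

lemma per_int:
  assumes "\<And>x y t. f (x, y, t + 2 * pi) = f (x, y, t)"
  shows "f (x, y, t + 2 * pi * of_int n) = f (x, y, t)"
proof (cases "n \<ge> 0")
  case True
  then have h: "real_of_int n = real (nat n)" by simp
  show ?thesis unfolding h by (rule per_nat[OF assms])
next
  case False
  define m where "m = nat (-n)"
  have h: "(t + 2 * pi * of_int n) + 2 * pi * real m = t" using False by (simp add: m_def)
  have "f (x, y, (t + 2 * pi * of_int n) + 2 * pi * real m) = f (x, y, t + 2 * pi * of_int n)"
    by (rule per_nat[OF assms])
  then show ?thesis unfolding h by simp
qed

lemma regular:
  assumes C: "C1_SE2 f" and S: "supported_in_disc (1/4) f"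
  shows "\<exists>B\<ge>0. \<forall>p q. norm (f p - f q) \<le> B * norm (p - q)"
proof -
  obtain D :: "real \<times> real \<times> real \<Rightarrow> ((real \<times> real \<times> real) \<Rightarrow>\<^sub>L real)"
    where hd: "\<And>p. (f has_derivative blinfun_apply (D p)) (at p)" and cD: "continuous_on UNIV D"
      and per: "\<And>x y t. f (x, y, t + 2 * pi) = f (x, y, t)"
  proof -
    have "\<exists>D :: real \<times> real \<times> real \<Rightarrow> ((real \<times> real \<times> real) \<Rightarrow>\<^sub>L real).
        (\<forall>p. (f has_derivative blinfun_apply (D p)) (at p)) \<and> continuous_on UNIV D"
      and per: "\<forall>x y t. f (x, y, t + 2 * pi) = f (x, y, t)" using C unfolding C1_SE2_def by auto
    then show ?thesis using that by blast
  qed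
  define Kc :: "(real \<times> real \<times> real) set" where "Kc = cbox (-1,-1,0) (1,1,2*pi)"
  have "compact (D ` Kc)" unfolding Kc_def
    using compact_continuous_image[OF continuous_on_subset[OF cD subset_UNIV] compact_cbox] .
  then have "bounded (D ` Kc)" by (rule compact_imp_bounded)
  then obtain B0 where B0: "\<And>z. z \<in> D ` Kc \<Longrightarrow> norm z \<le> B0"
    unfolding bounded_iff by blast
  define B where "B = max B0 0"
  have bnd: "norm (D p) \<le> B" for p
  proof -
    obtain x y t where p: "p = (x,y,t)" by (cases p) auto
    show ?thesis
    proof (cases "sqrt (x\<^sup>2 + y\<^sup>2) < 1/4")
      case False
      let ?U = "- closure {p. f p \<noteq> 0}"
      have pU: "p \<in> ?U"
      proof
        assume "p \<in> closure {p. f p \<noteq> 0}"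
        then have "p \<in> {(x, y, t). sqrt (x\<^sup>2 + y\<^sup>2) < 1/4}" using S unfolding supported_in_disc_def by blast
        then show False using False p by simp
      qed
      have oU: "open ?U" by auto
      have zU: "0 = f q" if "q \<in> ?U" for q
      proof (rule ccontr)
        assume "0 \<noteq> f q"
        then have "q \<in> {p. f p \<noteq> 0}" by simp
        then have "q \<in> closure {p. f p \<noteq> 0}" by (meson closure_subset subsetD)
        then show False using that by (meson ComplD)
      qed
      have "(f has_derivative (\<lambda>_. 0)) (at p within UNIV)"
        by (rule has_derivative_transform_within_open[OF has_derivative_const oU pU zU])
      then have "blinfun_apply (D p) = (\<lambda>_. 0)" using has_derivative_unique hd by blast
      then have "D p = 0" by (metis blinfun_eqI zero_blinfun.rep_eq)
      then show ?thesis by (simp add: B_def)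
    next
      case True
      have "\<bar>x\<bar> \<le> sqrt (x\<^sup>2 + y\<^sup>2)" "\<bar>y\<bar> \<le> sqrt (x\<^sup>2 + y\<^sup>2)"
        using real_sqrt_le_mono[of "x\<^sup>2" "x\<^sup>2 + y\<^sup>2"] real_sqrt_le_mono[of "y\<^sup>2" "x\<^sup>2 + y\<^sup>2"] by auto
      then have hx: "\<bar>x\<bar> \<le> 1" "\<bar>y\<bar> \<le> 1" using True by linarith+
      define n where "n = \<lfloor>t / (2*pi)\<rfloor>"
      define t' where "t' = t - 2 * pi * of_int n"
      have "of_int n \<le> t / (2*pi)" "t / (2*pi) < of_int n + 1" unfolding n_def by linarith+
      then have t'b: "0 \<le> t'" "t' \<le> 2*pi" unfolding t'_def using pi_gt_zero
        by (auto simp: field_simps)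
      define v where "v = (0::real, 0::real, 2 * pi * of_int n)"
      have pv: "(x,y,t') + v = p" by (simp add: v_def t'_def p)
      have "((\<lambda>q. q + v) has_derivative id) (at (x,y,t'))"
        by (rule has_derivative_add_const) (simp add: id_def has_derivative_ident)
      from diff_chain_at[OF this, of f "blinfun_apply (D p)"] hd[of p] pv
      have "(f \<circ> (\<lambda>q. q + v) has_derivative blinfun_apply (D p) \<circ> id) (at (x,y,t'))" by simp
      moreover have "f \<circ> (\<lambda>q. q + v) = f"
      proof
        fix q :: "real \<times> real \<times> real"
        obtain a b c where q: "q = (a,b,c)" by (cases q) auto
        show "(f \<circ> (\<lambda>q. q + v)) q = f q" using per_int[OF per, of a b c n] by (simp add: q v_def)
      qed
      ultimately have "(f has_derivative blinfun_apply (D p)) (at (x,y,t'))" by simp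
      then have "blinfun_apply (D p) = blinfun_apply (D (x,y,t'))" using has_derivative_unique hd by blast
      then have "D p = D (x,y,t')" by (simp add: blinfun_apply_inject)
      moreover have "(x,y,t') \<in> Kc" unfolding Kc_def using hx t'b by (auto simp: cbox_Pair_eq cbox_interval)
      ultimately show ?thesis using B0[of "D p"] by (auto simp: B_def)
    qed
  qed
  have B0': "B \<ge> 0" by (simp add: B_def)
  have fin: "norm (f p - f q) \<le> B * norm (p - q)" for p q
  proof -
    have d1: "\<And>x. x \<in> UNIV \<Longrightarrow> (f has_derivative blinfun_apply (D x)) (at x within UNIV)" using hd by simp
    have d2: "\<And>x. x \<in> UNIV \<Longrightarrow> onorm (blinfun_apply (D x)) \<le> B" using bnd by (simp add: norm_blinfun.rep_eq)
    show ?thesis by (rule differentiable_bound[OF convex_UNIV d1 d2]) auto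
  qed
  show ?thesis
    apply (rule exI[of _ B])
    using B0' fin by simp
qed


lemma phi_cis: "phi_k k1 k2 k3 x y t = cis (2 * pi * (of_int k1 * x + of_int k2 * y) + of_int k3 * t)"
  unfolding phi_k_def cis_conv_exp
  by (simp add: exp_add[symmetric] algebra_simps)

definition ph :: "int \<Rightarrow> int \<Rightarrow> int \<Rightarrow> real \<Rightarrow> real \<Rightarrow> real \<Rightarrow> complex" where
  "ph k1 k2 k3 x y t = cnj (phi_k k1 k2 k3 x y t)"

lemma ph_cis: "ph k1 k2 k3 x y t = cis (- (2 * pi * (of_int k1 * x + of_int k2 * y) + of_int k3 * t))"
  unfolding ph_def phi_cis cis_cnj ..

lemma ph_norm[simp]: "norm (ph k1 k2 k3 x y t) = 1"
  by (simp add: ph_cis)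

lemma ph_mult: "ph k1 k2 k3 x y t = ph k1 k2 k3 x' y' t' * ph k1 k2 k3 (x - x') (y - y') (t - t')"
  unfolding ph_cis cis_mult by (rule arg_cong[where f=cis]) (simp add: algebra_simps)

lemma ph_per: "ph k1 k2 k3 x y (t + 2 * pi * of_int m) = ph k1 k2 k3 x y t"
proof -
  have "ph k1 k2 k3 x y (t + 2 * pi * of_int m) = ph k1 k2 k3 x y t * cis (2 * pi * of_int (- k3 * m))"
    unfolding ph_cis cis_mult by (rule arg_cong[where f=cis]) (simp add: algebra_simps)
  also have "cis (2 * pi * of_int (- k3 * m)) = 1" by (rule cis_multiple_2pi) simp
  finally show ?thesis by simp
qed

lemma ph_zero: "ph k1 k2 k3 0 0 0 = 1" by (simp add: ph_cis)

lemma sum_support_eq: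
  fixes u :: "'b \<Rightarrow> 'a::comm_monoid_add"
  assumes "finite A" "finite B" "\<And>m. u m \<noteq> 0 \<Longrightarrow> m \<in> A \<and> m \<in> B"
  shows "sum u A = sum u B"
proof -
  have "sum u A = sum u (A \<inter> B)"
    by (rule sum.mono_neutral_right) (use assms in auto)
  also have "\<dots> = sum u B"
    by (rule sum.mono_neutral_left) (use assms in auto)
  finally show ?thesis .
qed

lemma sum_reindex_shift:
  fixes v :: "int \<Rightarrow> 'a::comm_monoid_add"
  shows "(\<Sum>i<N. v (int i - c)) = (\<Sum>m\<in>{-c..<int N - c}. v m)"
proof -
  have inj: "inj_on (\<lambda>i. int i - c) {..<N}" by (auto simp: inj_on_def)
  have img: "(\<lambda>i. int i - c) ` {..<N} = {-c..<int N - c}"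
  proof
    show "(\<lambda>i. int i - c) ` {..<N} \<subseteq> {-c..<int N - c}" by auto
    show "{-c..<int N - c} \<subseteq> (\<lambda>i. int i - c) ` {..<N}"
    proof
      fix m assume m: "m \<in> {-c..<int N - c}"
      then have "m = int (nat (m + c)) - c" "nat (m + c) < N" by auto
      then show "m \<in> (\<lambda>i. int i - c) ` {..<N}" by blast
    qed
  qed
  show ?thesis unfolding img[symmetric] sum.reindex[OF inj] comp_def ..
qed

lemma periodic_mod:
  fixes u :: "int \<Rightarrow> 'a"
  assumes "\<And>m. u (m + N) = u m"
  shows "u (m mod N) = u m"
proof -
  have k: "u (x + k * N) = u x" for x k :: int
  proof (induction k rule: int_induct[where k=0])
    case base then show ?case by simp
  next
    case (step1 i)
    have "u (x + (i + 1) * N) = u ((x + i * N) + N)" by (simp add: algebra_simps)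
    then show ?case using assms step1 by simp
  next
    case (step2 i)
    have "u (x + i * N) = u ((x + (i - 1) * N) + N)" by (simp add: algebra_simps)
    then show ?case using assms step2 by simp
  qed
  have "m = m mod N + (m div N) * N" by simp
  then have "u m = u (m mod N + (m div N) * N)" by simp
  then show ?thesis using k[of "m mod N" "m div N"] by simp
qed

lemma sum_periodic_shift:
  fixes u :: "int \<Rightarrow> 'a::comm_monoid_add"
  assumes per: "\<And>m. u (m + int N) = u m" and N: "N > 0"
  shows "(\<Sum>l<N. u (int l - c)) = (\<Sum>l<N. u (int l))"
proof -
  define g where "g l = nat ((int l - c) mod int N)" for l
  have gl: "int (g l) = (int l - c) mod int N" for l using N by (simp add: g_def)
  have gr: "g ` {..<N} \<subseteq> {..<N}"
  proof
    fix z assume "z \<in> g ` {..<N}"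
    then obtain l where "z = g l" by blast
    then have "int z < int N" using gl[of l] N by (simp add: Euclidean_Rings.pos_mod_bound)
    then show "z \<in> {..<N}" by simp
  qed
  have inj: "inj_on g {..<N}"
  proof (rule inj_onI)
    fix l l' assume l: "l \<in> {..<N}" "l' \<in> {..<N}" and e: "g l = g l'"
    then have "(int l - c) mod int N = (int l' - c) mod int N" using gl by metis
    then have "((int l - c) + c) mod int N = ((int l' - c) + c) mod int N" by (rule mod_add_cong) (rule refl)
    then have "int l mod int N = int l' mod int N" by simp
    then show "l = l'" using l by simp
  qed
  have img: "g ` {..<N} = {..<N}" by (rule endo_inj_surj[OF _ gr inj]) simp
  have "(\<Sum>l<N. u (int l - c)) = (\<Sum>l<N. u (int (g l)))"
    by (rule sum.cong) (simp_all add: gl periodic_mod[of u "int N", OF per])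
  also have "\<dots> = (\<Sum>l\<in>g ` {..<N}. u (int l))" unfolding sum.reindex[OF inj] comp_def ..
  also have "\<dots> = (\<Sum>l<N. u (int l))" by (simp add: img)
  finally show ?thesis .
qed


locale setting =
  fixes f \<rho> :: se2fun and M \<Lambda> :: real
  assumes M0: "M \<ge> 0" and L0: "\<Lambda> \<ge> 0"
  and fM: "\<And>p. \<bar>f p\<bar> \<le> M" and rM: "\<And>p. \<bar>\<rho> p\<bar> \<le> M"
  and fL: "\<And>x y t x' y' t'. \<bar>f (x,y,t) - f (x',y',t')\<bar> \<le> \<Lambda> * (\<bar>x-x'\<bar> + \<bar>y-y'\<bar> + \<bar>t-t'\<bar>)"
  and rL: "\<And>x y t x' y' t'. \<bar>\<rho> (x,y,t) - \<rho> (x',y',t')\<bar> \<le> \<Lambda> * (\<bar>x-x'\<bar> + \<bar>y-y'\<bar> + \<bar>t-t'\<bar>)"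
  and fS: "\<And>x y t. f (x,y,t) \<noteq> 0 \<Longrightarrow> \<bar>x\<bar> < 1/4 \<and> \<bar>y\<bar> < 1/4"
  and rS: "\<And>x y t. \<rho> (x,y,t) \<noteq> 0 \<Longrightarrow> \<bar>x\<bar> < 1/4 \<and> \<bar>y\<bar> < 1/4"
  and rP: "\<And>x y t. \<rho> (x,y,t + 2 * pi) = \<rho> (x,y,t)"
  and rad: "radial_in_translations \<rho>"
begin

lemma conv_eq: "se2_conv f \<rho> (u,v,w) =
   (1 / (2 * pi)) * integral (UNIV \<times> UNIV \<times> {0..2 * pi}) (\<lambda>(x,y,t). f (x,y,t) * \<rho> (u - x, v - y, w - t))"
proof -
  have r: "\<rho> (cos t * (u - x) + sin t * (v - y), - sin t * (u - x) + cos t * (v - y), w - t) = \<rho> (u - x, v - y, w - t)" for x y t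
    using rad unfolding radial_in_translations_def
    by (metis (no_types, lifting) cos_minus sin_minus mult_minus_left diff_minus_eq_add)
  have r': "\<rho> (cos t * (u - x) + sin t * (v - y), cos t * (v - y) - sin t * (u - x), w - t) = \<rho> (u - x, v - y, w - t)" for x y t
    using r[of t x y] by (simp add: algebra_simps)
  show ?thesis unfolding se2_conv_def by (simp add: r')
qed

lemma g_lip:
  "\<bar>f (x,y,t) * \<rho> (u - x, v - y, w - t) - f (x',y',t') * \<rho> (u - x', v - y', w - t')\<bar>
     \<le> (2 * M * \<Lambda>) * (\<bar>x-x'\<bar> + \<bar>y-y'\<bar> + \<bar>t-t'\<bar>)"
proof -
  let ?d = "\<bar>x-x'\<bar> + \<bar>y-y'\<bar> + \<bar>t-t'\<bar>"
  have "f (x,y,t) * \<rho> (u - x, v - y, w - t) - f (x',y',t') * \<rho> (u - x', v - y', w - t')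
      = (f (x,y,t) - f (x',y',t')) * \<rho> (u - x, v - y, w - t) + f (x',y',t') * (\<rho> (u - x, v - y, w - t) - \<rho> (u - x', v - y', w - t'))"
    by (simp add: algebra_simps)
  also have "\<bar>\<dots>\<bar> \<le> \<bar>f (x,y,t) - f (x',y',t')\<bar> * \<bar>\<rho> (u - x, v - y, w - t)\<bar> + \<bar>f (x',y',t')\<bar> * \<bar>\<rho> (u - x, v - y, w - t) - \<rho> (u - x', v - y', w - t')\<bar>"
    using abs_triangle_ineq[of "(f (x,y,t) - f (x',y',t')) * \<rho> (u - x, v - y, w - t)" "f (x',y',t') * (\<rho> (u - x, v - y, w - t) - \<rho> (u - x', v - y', w - t'))"]
    by (simp only: abs_mult)
  also have "\<dots> \<le> (\<Lambda> * ?d) * M + M * (\<Lambda> * ?d)"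
  proof (rule add_mono; rule mult_mono)
    show "\<bar>\<rho> (u - x, v - y, w - t) - \<rho> (u - x', v - y', w - t')\<bar> \<le> \<Lambda> * ?d"
      using rL[of "u-x" "v-y" "w-t" "u-x'" "v-y'" "w-t'"] by (simp add: abs_minus_commute)
  qed (use fL fM rM M0 L0 in auto)
  finally show ?thesis by (simp add: algebra_simps)
qed

lemma conv_riemann:
  assumes N1: "N1 > 0" and N2: "N2 > 0" and N3: "N3 > 0"
  shows "\<bar>se2_conv f \<rho> (u,v,w) - (1 / real (N1*N2*N3)) * (\<Sum>a<N1. \<Sum>b<N2. \<Sum>c<N3.
      f (-1/2 + real a / real N1, -1/2 + real b / real N2, 2 * pi * real c / real N3) *
      \<rho> (u - (-1/2 + real a / real N1), v - (-1/2 + real b / real N2), w - 2 * pi * real c / real N3))\<bar>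
    \<le> 2 * M * \<Lambda> * (1 / real N1 + 1 / real N2 + 2 * pi / real N3)"
proof -
  define g where "g = (\<lambda>(x,y,t). f (x,y,t) * \<rho> (u - x, v - y, w - t))"
  have gL: "\<bar>g (x,y,t) - g (x',y',t')\<bar> \<le> (2 * M * \<Lambda>) * (\<bar>x-x'\<bar> + \<bar>y-y'\<bar> + \<bar>t-t'\<bar>)" for x y t x' y' t'
    unfolding g_def using g_lip by simp
  define h1 where "h1 = 1 / real N1"
  define h2 where "h2 = 1 / real N2"
  define h3 where "h3 = 2 * pi / real N3"
  have h: "h1 > 0" "h2 > 0" "h3 > 0" using N1 N2 N3 by (auto simp: h1_def h2_def h3_def)
  have e1: "-1/2 + real N1 * h1 = 1/2" "-1/2 + real N2 * h2 = 1/2" "0 + real N3 * h3 = 2 * pi"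
    using N1 N2 N3 by (auto simp: h1_def h2_def h3_def)
  define Bx :: "(real \<times> real \<times> real) set" where "Bx = cbox (-1/2, -1/2, 0) (1/2, 1/2, 2 * pi)"
  define S where "S = (\<Sum>a<N1. \<Sum>b<N2. \<Sum>c<N3. g (-1/2 + real a * h1, -1/2 + real b * h2, 0 + real c * h3))"
  have R3: "\<bar>integral Bx g - h1 * h2 * h3 * S\<bar>
     \<le> (real N1*h1)*(real N2*h2)*(real N3*h3) * (2 * M * \<Lambda>) * (h1+h2+h3)"
    using riemann3[OF gL h, of "-1/2" "-1/2" 0 N1 N2 N3] unfolding e1 Bx_def S_def .
  have gc: "continuous_on Bx g" using lip3_cont[OF gL] by blast
  have gi: "(g has_integral integral Bx g) Bx" using gc unfolding Bx_def
    by (intro integrable_integral integrable_continuous)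
  have sub: "Bx \<subseteq> UNIV \<times> UNIV \<times> {0..2 * pi}" unfolding Bx_def by (auto simp: cbox_Pair_eq cbox_interval)
  have "((\<lambda>x. if x \<in> Bx then g x else 0) has_integral integral Bx g) (UNIV \<times> UNIV \<times> {0..2 * pi})"
    using has_integral_restrict[OF sub] gi by blast
  then have "(g has_integral integral Bx g) (UNIV \<times> UNIV \<times> {0..2 * pi})"
  proof (rule has_integral_eq[rotated])
    fix q :: "real \<times> real \<times> real" assume q: "q \<in> UNIV \<times> UNIV \<times> {0..2 * pi}"
    obtain x y t where qq: "q = (x,y,t)" by (cases q) auto
    show "(if q \<in> Bx then g q else 0) = g q"
    proof (cases "q \<in> Bx")
      case False
      then have "\<not> (\<bar>x\<bar> < 1/4 \<and> \<bar>y\<bar> < 1/4)" using q unfolding qq Bx_def by (auto simp: cbox_Pair_eq cbox_interval)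
      then have "f (x,y,t) = 0" using fS by blast
      then show ?thesis using False by (simp add: g_def qq)
    qed simp
  qed
  then have I: "integral (UNIV \<times> UNIV \<times> {0..2 * pi}) g = integral Bx g" by (rule integral_unique)
  have conv: "se2_conv f \<rho> (u,v,w) = (1 / (2 * pi)) * integral Bx g"
    using I unfolding conv_eq g_def by simp
  have Sg: "(\<Sum>a<N1. \<Sum>b<N2. \<Sum>c<N3.
      f (-1/2 + real a / real N1, -1/2 + real b / real N2, 2 * pi * real c / real N3) *
      \<rho> (u - (-1/2 + real a / real N1), v - (-1/2 + real b / real N2), w - 2 * pi * real c / real N3)) = S"
    unfolding S_def g_def h1_def h2_def h3_def by (simp add: mult.commute)
  have fac: "(1 / real (N1*N2*N3)) = (1 / (2 * pi)) * (h1 * h2 * h3)"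
    using N1 N2 N3 by (simp add: h1_def h2_def h3_def field_simps)
  have "\<bar>se2_conv f \<rho> (u,v,w) - (1 / real (N1*N2*N3)) * S\<bar> = (1 / (2 * pi)) * \<bar>integral Bx g - h1 * h2 * h3 * S\<bar>"
    unfolding conv fac using pi_gt_zero by (simp add: abs_mult right_diff_distrib[symmetric] mult.assoc diff_divide_distrib[symmetric] abs_divide)
  also have "\<dots> \<le> (1 / (2 * pi)) * ((real N1*h1)*(real N2*h2)*(real N3*h3) * (2 * M * \<Lambda>) * (h1+h2+h3))"
    by (rule mult_left_mono[OF R3]) simp
  also have "\<dots> = 2 * M * \<Lambda> * (1 / real N1 + 1 / real N2 + 2 * pi / real N3)"
    using N1 N2 N3 by (simp add: h1_def h2_def h3_def field_simps)
  finally show ?thesis unfolding Sg .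
qed

end


lemma supp_bound:
  assumes K: "K \<ge> 1" and m: "\<bar>real_of_int m / real (2*K+1)\<bar> < 1/4"
  shows "- int K < m" "m < int K"
proof -
  have N: "real (2*K+1) > 0" by simp
  have "\<bar>real_of_int m\<bar> < real (2*K+1) / 4" using m N by (simp add: abs_divide field_simps)
  moreover have "real (2*K+1) / 4 \<le> real K" using K by simp
  ultimately have "\<bar>real_of_int m\<bar> < real K" by linarith
  then show "- int K < m" "m < int K" by linarith+
qed

lemma window:
  fixes w :: "int \<Rightarrow> 'a::comm_monoid_add"
  assumes K: "K \<ge> 1" and b: "\<bar>-1/2 + real b / real (2*K+1)\<bar> < 1/4"
    and supp: "\<And>m. w m \<noteq> 0 \<Longrightarrow> \<bar>real_of_int m / real (2*K+1)\<bar> < 1/4"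
  shows "(\<Sum>j<2*K+1. w (int j - int b)) = (\<Sum>m\<in>{-int K..int K}. w m)"
proof -
  have N: "real (2*K+1) > 0" by simp
  have "(\<Sum>j<2*K+1. w (int j - int b)) = (\<Sum>m\<in>{-int b..<int (2*K+1) - int b}. w m)"
    by (rule sum_reindex_shift)
  also have "\<dots> = (\<Sum>m\<in>{-int K..int K}. w m)"
  proof (rule sum_support_eq)
    fix m assume wm: "w m \<noteq> 0"
    have mb: "- int K < m" "m < int K" using supp_bound[OF K supp[OF wm]] by auto
    have sm: "\<bar>real_of_int m\<bar> < real (2*K+1) / 4" using supp[OF wm] N by (simp add: abs_divide field_simps)
    have b2: "-1/4 < -1/2 + real b / real (2*K+1)" "-1/2 + real b / real (2*K+1) < 1/4"
      using b unfolding abs_less_iff by linarith+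
    have bb: "real (2*K+1) / 4 < real b" "real b < 3 * real (2*K+1) / 4"
      using b2 N by (simp_all add: field_simps)
    have sm2: "real_of_int m < real (2*K+1) / 4" "- (real (2*K+1) / 4) < real_of_int m" using sm by arith+
    have "- real b < real_of_int m" using sm2 bb by linarith
    moreover
    have "real_of_int m < real (2*K+1) - real b"
    proof -
      have "real (2*K+1) / 4 = real (2*K+1) - 3 * real (2*K+1) / 4" by (simp add: field_simps)
      then show ?thesis using sm2(1) bb(2) by linarith
    qed
    ultimately have "- int b < m" "m < int (2*K+1) - int b" by linarith+
    then show "m \<in> {-int b..<int (2*K+1) - int b} \<and> m \<in> {-int K..int K}" using mb by auto
  qed auto
  finally show ?thesis .
qed

lemma window_shift:
  fixes w :: "int \<Rightarrow> 'a::comm_monoid_add"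
  assumes K: "K \<ge> 1"
    and supp: "\<And>m. w m \<noteq> 0 \<Longrightarrow> \<bar>real_of_int m / real (2*K+1)\<bar> < 1/4"
  shows "(\<Sum>m\<in>{-int K..int K}. w (m + 1)) = (\<Sum>m\<in>{-int K..int K}. w m)"
proof -
  have inj: "inj_on (\<lambda>m. m + 1) {-int K..int K}" by (auto simp: inj_on_def)
  have img: "(\<lambda>m. m + 1) ` {-int K..int K} = {-int K + 1..int K + 1}"
  proof
    show "(\<lambda>m. m + 1) ` {-int K..int K} \<subseteq> {-int K + 1..int K + 1}" by auto
    show "{-int K + 1..int K + 1} \<subseteq> (\<lambda>m. m + 1) ` {-int K..int K}"
    proof
      fix m assume "m \<in> {-int K + 1..int K + 1}"
      then have "m - 1 \<in> {-int K..int K}" "m = (m - 1) + 1" by auto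
      then show "m \<in> (\<lambda>m. m + 1) ` {-int K..int K}" by blast
    qed
  qed
  have "(\<Sum>m\<in>{-int K..int K}. w (m + 1)) = (\<Sum>m\<in>{-int K + 1..int K + 1}. w m)"
    unfolding img[symmetric] sum.reindex[OF inj] comp_def ..
  also have "\<dots> = (\<Sum>m\<in>{-int K..int K}. w m)"
  proof (rule sum_support_eq)
    fix m assume wm: "w m \<noteq> 0"
    show "m \<in> {-int K + 1..int K + 1} \<and> m \<in> {-int K..int K}" using supp_bound[OF K supp[OF wm]] by auto
  qed auto
  finally show ?thesis .
qed

lemma reindex_center:
  fixes v :: "int \<Rightarrow> 'a::comm_monoid_add"
  shows "(\<Sum>i<2*K+1. v (int i - int K)) = (\<Sum>m\<in>{-int K..int K}. v m)"
proof -
  have "(\<Sum>i<2*K+1. v (int i - int K)) = (\<Sum>m\<in>{-int K..<int (2*K+1) - int K}. v m)"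
    by (rule sum_reindex_shift)
  also have "{-int K..<int (2*K+1) - int K} = {-int K..int K}" by auto
  finally show ?thesis .
qed

lemma sum3_prod:
  "(\<Sum>i<A. \<Sum>j<B. \<Sum>l<C. F i j l) = (\<Sum>(i,j,l)\<in>{..<A} \<times> {..<B} \<times> {..<C}. F i j l)"
  by (simp add: sum.cartesian_product)


locale grid = setting +
  fixes K1 K2 K3 :: nat and k1 k2 k3 :: int
  assumes K1: "K1 \<ge> 1" and K2: "K2 \<ge> 1" and K3: "K3 \<ge> 1"
begin

definition X :: "nat \<Rightarrow> real" where "X a = -1/2 + real a / real (2*K1+1)"
definition Y :: "nat \<Rightarrow> real" where "Y b = -1/2 + real b / real (2*K2+1)"
definition T :: "nat \<Rightarrow> real" where "T c = 2 * pi * real c / real (2*K3+1)"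

abbreviation "E \<equiv> ph k1 k2 k3"

definition D :: "se2fun \<Rightarrow> complex" where
  "D g = (1 / of_nat ((2*K1+1)*(2*K2+1)*(2*K3+1))) *
     (\<Sum>i<2*K1+1. \<Sum>j<2*K2+1. \<Sum>l<2*K3+1. of_real (g (X i, Y j, T l)) * E (X i) (Y j) (T l))"

lemma dft_D: "dft_coeff g k1 k2 k3 (2*K1+1) (2*K2+1) (2*K3+1) = D g"
  unfolding dft_coeff_def D_def Let_def X_def Y_def T_def ph_def ..

definition \<psi> :: "int \<Rightarrow> int \<Rightarrow> int \<Rightarrow> complex" where
  "\<psi> m1 m2 m3 = of_real (\<rho> (of_int m1 / real (2*K1+1), of_int m2 / real (2*K2+1), 2 * pi * of_int m3 / real (2*K3+1)))
     * E (of_int m1 / real (2*K1+1)) (of_int m2 / real (2*K2+1)) (2 * pi * of_int m3 / real (2*K3+1))"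

lemma \<psi>_per: "\<psi> m1 m2 (m + int (2*K3+1)) = \<psi> m1 m2 m"
proof -
  have e: "2 * pi * of_int (m + int (2*K3+1)) / real (2*K3+1) = 2 * pi * of_int m / real (2*K3+1) + 2 * pi * of_int 1"
    by (simp add: field_simps)
  show ?thesis unfolding \<psi>_def e ph_per
    using rP[of "of_int m1 / real (2*K1+1)" "of_int m2 / real (2*K2+1)" "2 * pi * of_int m / real (2*K3+1)"]
    by simp
qed

lemma \<psi>_supp: "\<psi> m1 m2 m3 \<noteq> 0 \<Longrightarrow> \<bar>real_of_int m1 / real (2*K1+1)\<bar> < 1/4 \<and> \<bar>real_of_int m2 / real (2*K2+1)\<bar> < 1/4"
  unfolding \<psi>_def using rS by fastforce

lemma inner:
  assumes a: "\<bar>X a\<bar> < 1/4" and b: "\<bar>Y b\<bar> < 1/4"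
  shows "(\<Sum>i<2*K1+1. \<Sum>j<2*K2+1. \<Sum>l<2*K3+1.
      of_real (\<rho> (X i - X a, Y j - Y b, T l - T c)) * E (X i - X a) (Y j - Y b) (T l - T c))
    = (\<Sum>m1\<in>{-int K1..int K1}. \<Sum>m2\<in>{-int K2..int K2}. \<Sum>l<2*K3+1. \<psi> m1 m2 (int l))"
proof -
  have dx: "X i - X a = of_int (int i - int a) / real (2*K1+1)" for i
    by (simp add: X_def diff_divide_distrib)
  have dy: "Y j - Y b = of_int (int j - int b) / real (2*K2+1)" for j
    by (simp add: Y_def diff_divide_distrib)
  have dt: "T l - T c = 2 * pi * of_int (int l - int c) / real (2*K3+1)" for l
    by (simp add: T_def diff_divide_distrib right_diff_distrib)
  have "(\<Sum>i<2*K1+1. \<Sum>j<2*K2+1. \<Sum>l<2*K3+1.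
      of_real (\<rho> (X i - X a, Y j - Y b, T l - T c)) * E (X i - X a) (Y j - Y b) (T l - T c))
    = (\<Sum>i<2*K1+1. \<Sum>j<2*K2+1. \<Sum>l<2*K3+1. \<psi> (int i - int a) (int j - int b) (int l - int c))"
    unfolding dx dy dt \<psi>_def ..
  also have "\<dots> = (\<Sum>i<2*K1+1. \<Sum>j<2*K2+1. \<Sum>l<2*K3+1. \<psi> (int i - int a) (int j - int b) (int l))"
  proof -
    have shift: "(\<Sum>l<2*K3+1. \<psi> m1 m2 (int l - int c)) = (\<Sum>l<2*K3+1. \<psi> m1 m2 (int l))" for m1 m2
      by (rule sum_periodic_shift) (rule \<psi>_per, simp)
    show ?thesis by (simp only: shift)
  qed
  also have "\<dots> = (\<Sum>i<2*K1+1. \<Sum>m2\<in>{-int K2..int K2}. \<Sum>l<2*K3+1. \<psi> (int i - int a) m2 (int l))"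
  proof (intro sum.cong refl)
    fix i
    show "(\<Sum>j<2*K2+1. \<Sum>l<2*K3+1. \<psi> (int i - int a) (int j - int b) (int l))
        = (\<Sum>m2\<in>{-int K2..int K2}. \<Sum>l<2*K3+1. \<psi> (int i - int a) m2 (int l))"
    proof (rule window[OF K2])
      show "\<bar>-1/2 + real b / real (2*K2+1)\<bar> < 1/4" using b by (simp add: Y_def)
      fix m assume "(\<Sum>l<2*K3+1. \<psi> (int i - int a) m (int l)) \<noteq> 0"
      then obtain l where "\<psi> (int i - int a) m (int l) \<noteq> 0" by (meson sum.neutral)
      then show "\<bar>real_of_int m / real (2*K2+1)\<bar> < 1/4" using \<psi>_supp by blast
    qed
  qed
  also have "\<dots> = (\<Sum>m1\<in>{-int K1..int K1}. \<Sum>m2\<in>{-int K2..int K2}. \<Sum>l<2*K3+1. \<psi> m1 m2 (int l))"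
  proof (rule window[OF K1])
    show "\<bar>-1/2 + real a / real (2*K1+1)\<bar> < 1/4" using a by (simp add: X_def)
    fix m assume "(\<Sum>m2\<in>{-int K2..int K2}. \<Sum>l<2*K3+1. \<psi> m m2 (int l)) \<noteq> 0"
    then obtain m2 where "(\<Sum>l<2*K3+1. \<psi> m m2 (int l)) \<noteq> 0" by (meson sum.neutral)
    then obtain l where "\<psi> m m2 (int l) \<noteq> 0" by (meson sum.neutral)
    then show "\<bar>real_of_int m / real (2*K1+1)\<bar> < 1/4" using \<psi>_supp by blast
  qed
  finally show ?thesis .
qed

definition R :: "real \<Rightarrow> real \<Rightarrow> real \<Rightarrow> real" where
  "R u v w = (1 / real ((2*K1+1)*(2*K2+1)*(2*K3+1))) * (\<Sum>a<2*K1+1. \<Sum>b<2*K2+1. \<Sum>c<2*K3+1.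
      f (X a, Y b, T c) * \<rho> (u - X a, v - Y b, w - T c))"

definition Bsum :: complex where
  "Bsum = (\<Sum>m1\<in>{-int K1..int K1}. \<Sum>m2\<in>{-int K2..int K2}. \<Sum>l<2*K3+1. \<psi> m1 m2 (int l))"

definition T1' :: complex where
  "T1' = (1 / of_nat ((2*K1+1)*(2*K2+1)*(2*K3+1))) *
     (\<Sum>i<2*K1+1. \<Sum>j<2*K2+1. \<Sum>l<2*K3+1. of_real (R (X i) (Y j) (T l)) * E (X i) (Y j) (T l))"

lemma T1'_eq: "T1' = D f * ((1 / of_nat ((2*K1+1)*(2*K2+1)*(2*K3+1))) * Bsum)"
proof -
  define c0 :: complex where "c0 = 1 / of_nat ((2*K1+1)*(2*K2+1)*(2*K3+1))"
  define P where "P = {..<2*K1+1} \<times> {..<2*K2+1} \<times> {..<2*K3+1}"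
  define Fq where "Fq = (\<lambda>(a,b,c). of_real (f (X a, Y b, T c)) * E (X a) (Y b) (T c))"
  define Gq where "Gq = (\<lambda>(i,j,l) (a,b,c). of_real (\<rho> (X i - X a, Y j - Y b, T l - T c)) * E (X i - X a) (Y j - Y b) (T l - T c))"
  have c1: "of_real (R (X i) (Y j) (T l)) * E (X i) (Y j) (T l) = c0 * (\<Sum>\<kappa>\<in>P. Fq \<kappa> * Gq (i,j,l) \<kappa>)" for i j l
  proof -
    have "of_real (R (X i) (Y j) (T l)) * E (X i) (Y j) (T l)
       = c0 * (\<Sum>a<2*K1+1. \<Sum>b<2*K2+1. \<Sum>c<2*K3+1.
           of_real (f (X a, Y b, T c) * \<rho> (X i - X a, Y j - Y b, T l - T c)) * E (X i) (Y j) (T l))"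
    proof -
      have "complex_of_real (R (X i) (Y j) (T l)) = c0 * (\<Sum>a<2*K1+1. \<Sum>b<2*K2+1. \<Sum>c<2*K3+1.
           of_real (f (X a, Y b, T c) * \<rho> (X i - X a, Y j - Y b, T l - T c)))"
        unfolding R_def c0_def by (simp only: of_real_mult of_real_sum of_real_divide of_real_1 of_real_of_nat_eq)
      then show ?thesis by (simp only: sum_distrib_right mult.assoc)
    qed
    also have "\<dots> = c0 * (\<Sum>a<2*K1+1. \<Sum>b<2*K2+1. \<Sum>c<2*K3+1. Fq (a,b,c) * Gq (i,j,l) (a,b,c))"
    proof -
      have "of_real (f (X a, Y b, T c) * \<rho> (X i - X a, Y j - Y b, T l - T c)) * E (X i) (Y j) (T l)
          = Fq (a,b,c) * Gq (i,j,l) (a,b,c)" for a b c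
        unfolding Fq_def Gq_def using ph_mult[of k1 k2 k3 "X i" "Y j" "T l" "X a" "Y b" "T c"]
        by (simp add: mult_ac)
      then show ?thesis by simp
    qed
    also have "\<dots> = c0 * (\<Sum>\<kappa>\<in>P. Fq \<kappa> * Gq (i,j,l) \<kappa>)"
      unfolding P_def sum3_prod by (simp add: case_prod_beta')
    finally show ?thesis .
  qed
  have c2: "Fq \<kappa> * (\<Sum>\<iota>\<in>P. Gq \<iota> \<kappa>) = Fq \<kappa> * Bsum" if "\<kappa> \<in> P" for \<kappa>
  proof (cases "Fq \<kappa> = 0")
    case False
    obtain a b c where k: "\<kappa> = (a,b,c)" by (cases \<kappa>) auto
    have "f (X a, Y b, T c) \<noteq> 0" using False unfolding Fq_def k by auto
    then have ab: "\<bar>X a\<bar> < 1/4" "\<bar>Y b\<bar> < 1/4" using fS by auto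
    have "(\<Sum>\<iota>\<in>P. Gq \<iota> \<kappa>) = (\<Sum>i<2*K1+1. \<Sum>j<2*K2+1. \<Sum>l<2*K3+1.
      of_real (\<rho> (X i - X a, Y j - Y b, T l - T c)) * E (X i - X a) (Y j - Y b) (T l - T c))"
      unfolding P_def sum3_prod k Gq_def by (simp add: case_prod_beta')
    also have "\<dots> = Bsum" unfolding Bsum_def by (rule inner[OF ab])
    finally show ?thesis by simp
  qed simp
  have "T1' = c0 * (\<Sum>\<iota>\<in>P. c0 * (\<Sum>\<kappa>\<in>P. Fq \<kappa> * Gq \<iota> \<kappa>))"
    unfolding T1'_def c0_def[symmetric] c1 unfolding P_def sum3_prod by (simp only: case_prod_eta split_def prod.collapse)
  also have "\<dots> = c0 * c0 * (\<Sum>\<iota>\<in>P. \<Sum>\<kappa>\<in>P. Fq \<kappa> * Gq \<iota> \<kappa>)"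
    by (simp only: sum_distrib_left[symmetric] mult.assoc)
  also have "\<dots> = c0 * c0 * (\<Sum>\<kappa>\<in>P. \<Sum>\<iota>\<in>P. Fq \<kappa> * Gq \<iota> \<kappa>)"
    by (subst sum.swap) (rule refl)
  also have "\<dots> = c0 * c0 * (\<Sum>\<kappa>\<in>P. Fq \<kappa> * (\<Sum>\<iota>\<in>P. Gq \<iota> \<kappa>))"
    by (simp only: sum_distrib_left)
  also have "\<dots> = c0 * c0 * (\<Sum>\<kappa>\<in>P. Fq \<kappa> * Bsum)"
    using c2 by (metis (no_types, lifting) sum.cong)
  also have "\<dots> = (c0 * (\<Sum>\<kappa>\<in>P. Fq \<kappa>)) * (c0 * Bsum)"
    by (simp add: sum_distrib_right mult_ac)
  also have "c0 * (\<Sum>\<kappa>\<in>P. Fq \<kappa>) = D f"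
    unfolding D_def c0_def[symmetric] P_def sum3_prod Fq_def by (simp add: case_prod_beta')
  finally show ?thesis unfolding c0_def .
qed

end


lemma sum_norm_card:
  fixes G :: "'b \<Rightarrow> 'a::real_normed_vector"
  assumes "\<And>a. a \<in> A \<Longrightarrow> norm (G a) \<le> e"
  shows "norm (sum G A) \<le> real (card A) * e"
proof -
  have "norm (sum G A) \<le> (\<Sum>a\<in>A. e)" by (rule sum_norm_le) (use assms in auto)
  then show ?thesis by simp
qed

lemma sum3_norm:
  fixes F :: "'b \<Rightarrow> 'c \<Rightarrow> 'd \<Rightarrow> 'a::real_normed_vector"
  assumes "\<And>a b c. a \<in> A \<Longrightarrow> b \<in> B \<Longrightarrow> c \<in> C \<Longrightarrow> norm (F a b c) \<le> e"
  shows "norm (\<Sum>a\<in>A. \<Sum>b\<in>B. \<Sum>c\<in>C. F a b c) \<le> real (card A) * (real (card B) * (real (card C) * e))"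
  by (intro sum_norm_card) (use assms in auto)

lemma cmod_cis_1: "cmod (cis \<theta> - 1) = 2 * \<bar>sin (\<theta>/2)\<bar>"
proof -
  have c: "cos \<theta> = 1 - 2 * (sin (\<theta>/2))\<^sup>2" using cos_double_sin[of "\<theta>/2"] by simp
  have s: "sin \<theta> = 2 * sin (\<theta>/2) * cos (\<theta>/2)" using sin_double[of "\<theta>/2"] by simp
  have "(cos \<theta> - 1)\<^sup>2 + (sin \<theta>)\<^sup>2 = 4 * (sin (\<theta>/2))\<^sup>2 * ((sin (\<theta>/2))\<^sup>2 + (cos (\<theta>/2))\<^sup>2)"
    unfolding c s by algebra
  also have "\<dots> = 4 * (sin (\<theta>/2))\<^sup>2" using sin_cos_squared_add[of "\<theta>/2"] by simp
  also have "\<dots> = (2 * \<bar>sin (\<theta>/2)\<bar>)\<^sup>2" by (simp add: power_mult_distrib)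
  finally have e: "(cos \<theta> - 1)\<^sup>2 + (sin \<theta>)\<^sup>2 = (2 * \<bar>sin (\<theta>/2)\<bar>)\<^sup>2" .
  have "cmod (cis \<theta> - 1) = sqrt ((cos \<theta> - 1)\<^sup>2 + (sin \<theta>)\<^sup>2)" by (simp add: cmod_def)
  also have "\<dots> = \<bar>2 * \<bar>sin (\<theta>/2)\<bar>\<bar>" unfolding e by (rule real_sqrt_abs)
  finally show ?thesis by simp
qed

lemma cis_upper: "cmod (cis \<theta> - 1) \<le> \<bar>\<theta>\<bar>"
  unfolding cmod_cis_1 using abs_sin_x_le_abs_x[of "\<theta>/2"] by simp

lemma sin_lower:
  fixes x :: real
  assumes "\<bar>x\<bar> \<le> pi/2"
  shows "\<bar>sin x\<bar> \<ge> \<bar>x\<bar> / 2"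
proof -
  have "\<bar>sin x - (\<Sum>m<3. sin_coeff m * x ^ m)\<bar> \<le> inverse (fact 3) * \<bar>x\<bar> ^ 3"
    by (rule Maclaurin_sin_bound)
  moreover have "(\<Sum>m<3. sin_coeff m * x ^ m) = x"
    unfolding numeral_3_eq_3 by (simp add: sin_coeff_def)
  moreover have "inverse (fact 3 :: real) = 1/6" by (simp add: fact_numeral)
  ultimately have b: "\<bar>sin x - x\<bar> \<le> \<bar>x\<bar> ^ 3 / 6" by simp
  have "\<bar>x\<bar> ^ 3 / 6 = \<bar>x\<bar> * (\<bar>x\<bar>\<^sup>2 / 6)" by (simp add: power2_eq_square power3_eq_cube)
  also have "\<dots> \<le> \<bar>x\<bar> * (1/2)"
  proof (rule mult_left_mono)
    have "pi \<le> 16/5" using pi_approx(2) by simp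
    then have "\<bar>x\<bar> \<le> 8/5" using assms by linarith
    then have "\<bar>x\<bar>\<^sup>2 \<le> (8/5)\<^sup>2" by (intro power_mono) auto
    then show "\<bar>x\<bar>\<^sup>2 / 6 \<le> 1/2" by (simp add: power2_eq_square)
  qed simp
  finally show ?thesis using b by linarith
qed

lemma cis_lower:
  assumes "\<bar>\<theta>\<bar> \<le> pi"
  shows "cmod (cis \<theta> - 1) \<ge> \<bar>\<theta>\<bar> / 2"
  unfolding cmod_cis_1 using sin_lower[of "\<theta>/2"] assms by simp


context grid begin

definition \<Phi> :: "real \<Rightarrow> real \<Rightarrow> real \<Rightarrow> complex" where
  "\<Phi> x y t = of_real (\<rho> (x,y,t)) * E x y t"

definition Bc :: "real \<Rightarrow> real \<Rightarrow> complex" where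
  "Bc c1 c2 = (\<Sum>m1\<in>{-int K1..int K1}. \<Sum>m2\<in>{-int K2..int K2}. \<Sum>l<2*K3+1.
      \<Phi> (of_int m1 / real (2*K1+1) + c1) (of_int m2 / real (2*K2+1) + c2) (T l))"

lemma Bsum_Bc: "Bsum = Bc 0 0"
  unfolding Bsum_def Bc_def \<psi>_def \<Phi>_def T_def by simp

lemma center_eq:
  assumes "n = 2*K+1"
  shows "-1/2 + real i / real n = of_int (int i - int K) / real n + (-1/(2*real n))"
proof -
  have n: "real n = 2 * real K + 1" using assms by simp
  have "real n > 0" using n by simp
  then have "-1/2 + real i / real n = (2 * real i - real n) / (2 * real n)" by (simp add: field_simps)
  also have "\<dots> = (2 * (real i - real K) - 1) / (2 * real n)" unfolding n by simp
  also have "\<dots> = of_int (int i - int K) / real n + (-1/(2*real n))" using \<open>real n > 0\<close> by (simp add: field_simps)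
  finally show ?thesis .
qed

lemma D_rho: "D \<rho> = (1 / of_nat ((2*K1+1)*(2*K2+1)*(2*K3+1))) * Bc (-1/(2*real (2*K1+1))) (-1/(2*real (2*K2+1)))"
proof -
  have x: "X i = of_int (int i - int K1) / real (2*K1+1) + (-1/(2*real (2*K1+1)))" for i
    unfolding X_def by (rule center_eq) simp
  have y: "Y j = of_int (int j - int K2) / real (2*K2+1) + (-1/(2*real (2*K2+1)))" for j
    unfolding Y_def by (rule center_eq) simp
  have "(\<Sum>i<2*K1+1. \<Sum>j<2*K2+1. \<Sum>l<2*K3+1. of_real (\<rho> (X i, Y j, T l)) * E (X i) (Y j) (T l))
     = (\<Sum>i<2*K1+1. \<Sum>j<2*K2+1. \<Sum>l<2*K3+1.
         \<Phi> (of_int (int i - int K1) / real (2*K1+1) + (-1/(2*real (2*K1+1))))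
           (of_int (int j - int K2) / real (2*K2+1) + (-1/(2*real (2*K2+1)))) (T l))"
    unfolding \<Phi>_def x y ..
  also have "\<dots> = (\<Sum>m1\<in>{-int K1..int K1}. \<Sum>j<2*K2+1. \<Sum>l<2*K3+1.
         \<Phi> (of_int m1 / real (2*K1+1) + (-1/(2*real (2*K1+1))))
           (of_int (int j - int K2) / real (2*K2+1) + (-1/(2*real (2*K2+1)))) (T l))"
    by (rule reindex_center)
  also have "\<dots> = Bc (-1/(2*real (2*K1+1))) (-1/(2*real (2*K2+1)))"
    unfolding Bc_def by (intro sum.cong refl reindex_center)
  finally show ?thesis unfolding D_def by simp
qed

lemma card_sym: "card {-int K..int K} = 2*K+1" by simp

lemma Bc_approx:
  "cmod (Bc c1 c2 - E c1 c2 0 * Bsum) \<le> real ((2*K1+1)*(2*K2+1)*(2*K3+1)) * (\<Lambda> * (\<bar>c1\<bar> + \<bar>c2\<bar>))"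
proof -
  define x where "x m = of_int m / real (2*K1+1)" for m
  define y where "y m = of_int m / real (2*K2+1)" for m
  have "Bc c1 c2 - E c1 c2 0 * Bsum = (\<Sum>m1\<in>{-int K1..int K1}. \<Sum>m2\<in>{-int K2..int K2}. \<Sum>l<2*K3+1.
      \<Phi> (x m1 + c1) (y m2 + c2) (T l) - E c1 c2 0 * \<Phi> (x m1) (y m2) (T l))"
    unfolding Bsum_Bc Bc_def x_def y_def add_0_right by (simp only: sum_distrib_left sum_subtractf[symmetric])
  also have "cmod \<dots> \<le> real (card {-int K1..int K1}) * (real (card {-int K2..int K2}) * (real (card {..<2*K3+1}) * (\<Lambda> * (\<bar>c1\<bar> + \<bar>c2\<bar>))))"
  proof (rule sum3_norm)
    fix m1 m2 l
    have "\<Phi> (x m1 + c1) (y m2 + c2) (T l) - E c1 c2 0 * \<Phi> (x m1) (y m2) (T l)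
       = (E c1 c2 0 * E (x m1) (y m2) (T l)) * of_real (\<rho> (x m1 + c1, y m2 + c2, T l) - \<rho> (x m1, y m2, T l))"
      unfolding \<Phi>_def using ph_mult[of k1 k2 k3 "x m1 + c1" "y m2 + c2" "T l" c1 c2 0]
      by (simp add: algebra_simps)
    also have "cmod \<dots> = \<bar>\<rho> (x m1 + c1, y m2 + c2, T l) - \<rho> (x m1, y m2, T l)\<bar>"
      by (simp add: norm_mult of_real_diff[symmetric] del: of_real_diff)
    also have "\<dots> \<le> \<Lambda> * (\<bar>c1\<bar> + \<bar>c2\<bar>)" using rL[of "x m1 + c1" "y m2 + c2" "T l" "x m1" "y m2" "T l"] by simp
    finally show "cmod (\<Phi> (x m1 + c1) (y m2 + c2) (T l) - E c1 c2 0 * \<Phi> (x m1) (y m2) (T l)) \<le> \<Lambda> * (\<bar>c1\<bar> + \<bar>c2\<bar>)" .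
  qed
  also have "\<dots> = real ((2*K1+1)*(2*K2+1)*(2*K3+1)) * (\<Lambda> * (\<bar>c1\<bar> + \<bar>c2\<bar>))"
    unfolding card_sym by (simp add: algebra_simps)
  finally show ?thesis .
qed

lemma \<Phi>_supp: "\<Phi> x y t \<noteq> 0 \<Longrightarrow> \<bar>x\<bar> < 1/4 \<and> \<bar>y\<bar> < 1/4"
  unfolding \<Phi>_def using rS by fastforce

lemma Bc_shift1: "Bc (1 / real (2*K1+1)) 0 = Bsum"
proof -
  define w where "w m1 = (\<Sum>m2\<in>{-int K2..int K2}. \<Sum>l<2*K3+1.
      \<Phi> (of_int m1 / real (2*K1+1)) (of_int m2 / real (2*K2+1) + 0) (T l))" for m1
  have e: "of_int m1 / real (2*K1+1) + 1 / real (2*K1+1) = of_int (m1 + 1) / real (2*K1+1)" for m1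
    by (simp add: add_divide_distrib)
  have "Bc (1 / real (2*K1+1)) 0 = (\<Sum>m1\<in>{-int K1..int K1}. w (m1 + 1))"
    unfolding Bc_def w_def e ..
  also have "\<dots> = (\<Sum>m1\<in>{-int K1..int K1}. w m1)"
  proof (rule window_shift[OF K1])
    fix m assume "w m \<noteq> 0"
    then obtain m2 where "(\<Sum>l<2*K3+1. \<Phi> (of_int m / real (2*K1+1)) (of_int m2 / real (2*K2+1) + 0) (T l)) \<noteq> 0"
      unfolding w_def by (meson sum.neutral)
    then obtain l where "\<Phi> (of_int m / real (2*K1+1)) (of_int m2 / real (2*K2+1) + 0) (T l) \<noteq> 0" by (meson sum.neutral)
    then show "\<bar>real_of_int m / real (2*K1+1)\<bar> < 1/4" using \<Phi>_supp by blast
  qed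
  also have "\<dots> = Bsum" unfolding Bsum_Bc Bc_def w_def by simp
  finally show ?thesis .
qed

lemma Bc_shift2: "Bc 0 (1 / real (2*K2+1)) = Bsum"
proof -
  define w where "w m1 m2 = (\<Sum>l<2*K3+1. \<Phi> (of_int m1 / real (2*K1+1) + 0) (of_int m2 / real (2*K2+1)) (T l))" for m1 m2
  have e: "of_int m2 / real (2*K2+1) + 1 / real (2*K2+1) = of_int (m2 + 1) / real (2*K2+1)" for m2
    by (simp add: add_divide_distrib)
  have "Bc 0 (1 / real (2*K2+1)) = (\<Sum>m1\<in>{-int K1..int K1}. \<Sum>m2\<in>{-int K2..int K2}. w m1 (m2 + 1))"
    unfolding Bc_def w_def e ..
  also have "\<dots> = (\<Sum>m1\<in>{-int K1..int K1}. \<Sum>m2\<in>{-int K2..int K2}. w m1 m2)"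
  proof (rule sum.cong[OF refl])
    fix m1
    show "(\<Sum>m2\<in>{-int K2..int K2}. w m1 (m2 + 1)) = (\<Sum>m2\<in>{-int K2..int K2}. w m1 m2)"
    proof (rule window_shift[OF K2])
      fix m assume "w m1 m \<noteq> 0"
      then obtain l where "\<Phi> (of_int m1 / real (2*K1+1) + 0) (of_int m / real (2*K2+1)) (T l) \<noteq> 0"
        unfolding w_def by (meson sum.neutral)
      then show "\<bar>real_of_int m / real (2*K2+1)\<bar> < 1/4" using \<Phi>_supp by blast
    qed
  qed
  also have "\<dots> = Bsum" unfolding Bsum_Bc Bc_def w_def by simp
  finally show ?thesis .
qed

end


context grid begin

abbreviation "NN \<equiv> (2*K1+1)*(2*K2+1)*(2*K3+1)"

lemma NN_pos: "real NN > 0" by (simp only: of_nat_0_less_iff) simp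

lemma Bsum_k1: assumes kb: "\<bar>k1\<bar> \<le> int K1"
  shows "cmod Bsum * \<bar>real_of_int k1\<bar> \<le> real NN * \<Lambda> / pi"
proof -
  define n where "n = real (2*K1+1)"
  have n0: "n > 0" by (simp add: n_def)
  define \<theta> where "\<theta> = - (2 * pi * (real_of_int k1 * (1 / n) + real_of_int k2 * 0) + real_of_int k3 * 0)"
  have Ec: "E (1/n) 0 0 = cis \<theta>" unfolding ph_cis \<theta>_def ..
  have th: "\<bar>\<theta>\<bar> = 2 * pi * \<bar>real_of_int k1\<bar> / n" unfolding \<theta>_def using n0 by (simp add: abs_mult)
  have "2 * \<bar>real_of_int k1\<bar> \<le> n" using kb unfolding n_def by linarith
  then have "\<bar>\<theta>\<bar> \<le> pi" unfolding th using n0 by (simp add: field_simps)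
  then have low: "cmod (cis \<theta> - 1) \<ge> pi * \<bar>real_of_int k1\<bar> / n" using cis_lower[of \<theta>] th by simp
  have "cmod (Bc (1/n) 0 - E (1/n) 0 0 * Bsum) \<le> real NN * (\<Lambda> * (\<bar>1/n\<bar> + \<bar>0\<bar>))" by (rule Bc_approx)
  moreover have "Bc (1/n) 0 = Bsum" unfolding n_def by (rule Bc_shift1)
  ultimately have "cmod (Bsum - cis \<theta> * Bsum) \<le> real NN * (\<Lambda> / n)" using n0 by (simp add: Ec)
  moreover have "Bsum - cis \<theta> * Bsum = - (Bsum * (cis \<theta> - 1))" by (simp add: algebra_simps)
  ultimately have "cmod Bsum * cmod (cis \<theta> - 1) \<le> real NN * (\<Lambda> / n)" by (simp add: norm_mult)
  moreover have "cmod Bsum * (pi * \<bar>real_of_int k1\<bar> / n) \<le> cmod Bsum * cmod (cis \<theta> - 1)"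
    by (rule mult_left_mono[OF low]) simp
  ultimately have "cmod Bsum * (pi * \<bar>real_of_int k1\<bar> / n) \<le> real NN * (\<Lambda> / n)" by linarith
  then have "cmod Bsum * \<bar>real_of_int k1\<bar> * pi \<le> real NN * \<Lambda>" using n0 by (simp add: field_simps)
  then show ?thesis using pi_gt_zero by (simp add: field_simps)
qed

lemma Bsum_k2: assumes kb: "\<bar>k2\<bar> \<le> int K2"
  shows "cmod Bsum * \<bar>real_of_int k2\<bar> \<le> real NN * \<Lambda> / pi"
proof -
  define n where "n = real (2*K2+1)"
  have n0: "n > 0" by (simp add: n_def)
  define \<theta> where "\<theta> = - (2 * pi * (real_of_int k1 * 0 + real_of_int k2 * (1 / n)) + real_of_int k3 * 0)"
  have Ec: "E 0 (1/n) 0 = cis \<theta>" unfolding ph_cis \<theta>_def ..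
  have th: "\<bar>\<theta>\<bar> = 2 * pi * \<bar>real_of_int k2\<bar> / n" unfolding \<theta>_def using n0 by (simp add: abs_mult)
  have "2 * \<bar>real_of_int k2\<bar> \<le> n" using kb unfolding n_def by linarith
  then have "\<bar>\<theta>\<bar> \<le> pi" unfolding th using n0 by (simp add: field_simps)
  then have low: "cmod (cis \<theta> - 1) \<ge> pi * \<bar>real_of_int k2\<bar> / n" using cis_lower[of \<theta>] th by simp
  have "cmod (Bc 0 (1/n) - E 0 (1/n) 0 * Bsum) \<le> real NN * (\<Lambda> * (\<bar>0\<bar> + \<bar>1/n\<bar>))" by (rule Bc_approx)
  moreover have "Bc 0 (1/n) = Bsum" unfolding n_def by (rule Bc_shift2)
  ultimately have "cmod (Bsum - cis \<theta> * Bsum) \<le> real NN * (\<Lambda> / n)" using n0 by (simp add: Ec)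
  moreover have "Bsum - cis \<theta> * Bsum = - (Bsum * (cis \<theta> - 1))" by (simp add: algebra_simps)
  ultimately have "cmod Bsum * cmod (cis \<theta> - 1) \<le> real NN * (\<Lambda> / n)" by (simp add: norm_mult)
  moreover have "cmod Bsum * (pi * \<bar>real_of_int k2\<bar> / n) \<le> cmod Bsum * cmod (cis \<theta> - 1)"
    by (rule mult_left_mono[OF low]) simp
  ultimately have "cmod Bsum * (pi * \<bar>real_of_int k2\<bar> / n) \<le> real NN * (\<Lambda> / n)" by linarith
  then have "cmod Bsum * \<bar>real_of_int k2\<bar> * pi \<le> real NN * \<Lambda>" using n0 by (simp add: field_simps)
  then show ?thesis using pi_gt_zero by (simp add: field_simps)
qed

lemma c0_norm: "cmod (1 / of_nat NN) = 1 / real NN"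
  by (simp only: norm_divide norm_one norm_of_nat)

lemma Drho_bound:
  assumes kb1: "\<bar>k1\<bar> \<le> int K1" and kb2: "\<bar>k2\<bar> \<le> int K2"
  shows "cmod (D \<rho> - (1 / of_nat NN) * Bsum) \<le> \<Lambda> * (3 / (2 * real (2*K1+1)) + 3 / (2 * real (2*K2+1)))"
proof -
  define n1 where "n1 = real (2*K1+1)"
  define n2 where "n2 = real (2*K2+1)"
  have n0: "n1 > 0" "n2 > 0" by (auto simp: n1_def n2_def)
  define c1 where "c1 = -1/(2*n1)"
  define c2 where "c2 = -1/(2*n2)"
  define \<theta> where "\<theta> = - (2 * pi * (real_of_int k1 * c1 + real_of_int k2 * c2) + real_of_int k3 * 0)"
  have Ec: "E c1 c2 0 = cis \<theta>" unfolding ph_cis \<theta>_def ..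
  have th: "\<bar>\<theta>\<bar> \<le> pi * \<bar>real_of_int k1\<bar> / n1 + pi * \<bar>real_of_int k2\<bar> / n2"
  proof -
    have "\<theta> = pi * real_of_int k1 / n1 + pi * real_of_int k2 / n2" unfolding \<theta>_def c1_def c2_def using n0 by (simp add: field_simps)
    then show ?thesis using n0 by (simp add: abs_mult abs_divide) (rule abs_triangle_ineq[THEN order_trans], simp add: abs_mult abs_divide)
  qed
  have A: "cmod (Bc c1 c2 - E c1 c2 0 * Bsum) \<le> real NN * (\<Lambda> * (1/(2*n1) + 1/(2*n2)))"
    using Bc_approx[of c1 c2] n0 by (simp add: c1_def c2_def abs_divide)
  have "cmod ((E c1 c2 0 - 1) * Bsum) = cmod (cis \<theta> - 1) * cmod Bsum" by (simp add: Ec norm_mult)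
  also have "\<dots> \<le> (pi * \<bar>real_of_int k1\<bar> / n1 + pi * \<bar>real_of_int k2\<bar> / n2) * cmod Bsum"
    by (rule mult_right_mono[OF order_trans[OF cis_upper th]]) simp
  also have "\<dots> = (pi / n1) * (cmod Bsum * \<bar>real_of_int k1\<bar>) + (pi / n2) * (cmod Bsum * \<bar>real_of_int k2\<bar>)"
    by (simp add: algebra_simps)
  also have "\<dots> \<le> (pi / n1) * (real NN * \<Lambda> / pi) + (pi / n2) * (real NN * \<Lambda> / pi)"
    using Bsum_k1[OF kb1] Bsum_k2[OF kb2] n0 pi_gt_zero by (intro add_mono mult_left_mono) auto
  also have "\<dots> = real NN * \<Lambda> * (1 / n1 + 1 / n2)"
  proof -
    have gen: "(pi / n1) * (A / pi) + (pi / n2) * (A / pi) = A * (1 / n1 + 1 / n2)" for A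
      using pi_gt_zero by (simp add: field_simps)
    show ?thesis using gen[of "real NN * \<Lambda>"] by simp
  qed
  finally have B: "cmod ((E c1 c2 0 - 1) * Bsum) \<le> real NN * \<Lambda> * (1 / n1 + 1 / n2)" .
  have eq: "Bc c1 c2 - Bsum = (Bc c1 c2 - E c1 c2 0 * Bsum) + (E c1 c2 0 - 1) * Bsum" by (simp add: algebra_simps)
  have "cmod (Bc c1 c2 - Bsum) \<le> cmod (Bc c1 c2 - E c1 c2 0 * Bsum) + cmod ((E c1 c2 0 - 1) * Bsum)"
    unfolding eq by (rule norm_triangle_ineq)
  then have "cmod (Bc c1 c2 - Bsum) \<le> real NN * (\<Lambda> * (1/(2*n1) + 1/(2*n2))) + real NN * \<Lambda> * (1 / n1 + 1 / n2)"
    using A B by linarith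
  also have "\<dots> = real NN * (\<Lambda> * (3 / (2 * n1) + 3 / (2 * n2)))" by (simp add: field_simps)
  finally have C: "cmod (Bc c1 c2 - Bsum) \<le> real NN * (\<Lambda> * (3 / (2 * n1) + 3 / (2 * n2)))" .
  have e2: "D \<rho> - (1 / of_nat NN) * Bsum = (1 / of_nat NN) * (Bc c1 c2 - Bsum)"
    unfolding D_rho c1_def c2_def n1_def n2_def by (simp only: right_diff_distrib)
  have "cmod (D \<rho> - (1 / of_nat NN) * Bsum) = (1 / real NN) * cmod (Bc c1 c2 - Bsum)"
    unfolding e2 by (simp only: norm_mult c0_norm)
  also have "\<dots> \<le> (1 / real NN) * (real NN * (\<Lambda> * (3 / (2 * n1) + 3 / (2 * n2))))"
    by (rule mult_left_mono[OF C]) simp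
  also have "\<dots> = \<Lambda> * (3 / (2 * n1) + 3 / (2 * n2))" using NN_pos by simp
  finally show ?thesis unfolding n1_def n2_def .
qed

lemma Df_bound: "cmod (D f) \<le> M"
proof -
  have "cmod (\<Sum>i<2*K1+1. \<Sum>j<2*K2+1. \<Sum>l<2*K3+1. of_real (f (X i, Y j, T l)) * E (X i) (Y j) (T l))
      \<le> real (card {..<2*K1+1}) * (real (card {..<2*K2+1}) * (real (card {..<2*K3+1}) * M))"
    by (rule sum3_norm) (simp add: norm_mult fM)
  also have "\<dots> = real NN * M" by (simp add: algebra_simps)
  finally have "cmod (\<Sum>i<2*K1+1. \<Sum>j<2*K2+1. \<Sum>l<2*K3+1. of_real (f (X i, Y j, T l)) * E (X i) (Y j) (T l)) \<le> real NN * M" .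
  then have "(1 / real NN) * cmod (\<Sum>i<2*K1+1. \<Sum>j<2*K2+1. \<Sum>l<2*K3+1. of_real (f (X i, Y j, T l)) * E (X i) (Y j) (T l)) \<le> (1 / real NN) * (real NN * M)"
    by (rule mult_left_mono) simp
  moreover have "cmod (D f) = (1 / real NN) * cmod (\<Sum>i<2*K1+1. \<Sum>j<2*K2+1. \<Sum>l<2*K3+1. of_real (f (X i, Y j, T l)) * E (X i) (Y j) (T l))"
    unfolding D_def by (simp only: norm_mult c0_norm)
  moreover have "(1 / real NN) * (real NN * M) = M" using NN_pos by simp
  ultimately show ?thesis by simp
qed

lemma conv_bound:
  "cmod (D (se2_conv f \<rho>) - T1') \<le> 2 * M * \<Lambda> * (1 / real (2*K1+1) + 1 / real (2*K2+1) + 2 * pi / real (2*K3+1))"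
proof -
  define e where "e = 2 * M * \<Lambda> * (1 / real (2*K1+1) + 1 / real (2*K2+1) + 2 * pi / real (2*K3+1))"
  have pt: "\<bar>se2_conv f \<rho> (X i, Y j, T l) - R (X i) (Y j) (T l)\<bar> \<le> e" for i j l
    unfolding e_def R_def X_def Y_def T_def by (rule conv_riemann) auto
  have "D (se2_conv f \<rho>) - T1' = (1 / of_nat NN) * (\<Sum>i<2*K1+1. \<Sum>j<2*K2+1. \<Sum>l<2*K3+1.
      of_real (se2_conv f \<rho> (X i, Y j, T l) - R (X i) (Y j) (T l)) * E (X i) (Y j) (T l))"
    unfolding D_def T1'_def by (simp only: right_diff_distrib[symmetric] sum_subtractf[symmetric] of_real_diff left_diff_distrib)
  also have "cmod \<dots> \<le> (1 / real NN) * (real (card {..<2*K1+1}) * (real (card {..<2*K2+1}) * (real (card {..<2*K3+1}) * e)))"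
    unfolding norm_mult c0_norm by (rule mult_left_mono[OF sum3_norm]) (auto simp: norm_mult pt of_real_diff[symmetric] simp del: of_real_diff)
  also have "\<dots> = e" using NN_pos by (simp add: field_simps)
  finally show ?thesis unfolding e_def .
qed

lemma main_local:
  assumes kb1: "\<bar>k1\<bar> \<le> int K1" and kb2: "\<bar>k2\<bar> \<le> int K2"
  shows "cmod (D (se2_conv f \<rho>) - D f * D \<rho>) \<le>
     2 * M * \<Lambda> * (1 / real (2*K1+1) + 1 / real (2*K2+1) + 2 * pi / real (2*K3+1))
     + M * (\<Lambda> * (3 / (2 * real (2*K1+1)) + 3 / (2 * real (2*K2+1))))"
proof -
  have "D (se2_conv f \<rho>) - D f * D \<rho> = (D (se2_conv f \<rho>) - T1') + D f * ((1 / of_nat NN) * Bsum - D \<rho>)"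
    unfolding T1'_eq by (simp add: algebra_simps)
  also have "cmod \<dots> \<le> cmod (D (se2_conv f \<rho>) - T1') + cmod (D f) * cmod (D \<rho> - (1 / of_nat NN) * Bsum)"
    using norm_triangle_ineq[of "D (se2_conv f \<rho>) - T1'" "D f * ((1 / of_nat NN) * Bsum - D \<rho>)"]
    by (simp add: norm_mult norm_minus_commute)
  also have "\<dots> \<le> 2 * M * \<Lambda> * (1 / real (2*K1+1) + 1 / real (2*K2+1) + 2 * pi / real (2*K3+1))
     + M * (\<Lambda> * (3 / (2 * real (2*K1+1)) + 3 / (2 * real (2*K2+1))))"
    by (intro add_mono conv_bound mult_mono Df_bound Drho_bound[OF kb1 kb2]) (auto simp: M0)
  finally show ?thesis .
qed

end


lemma norm3_le: "norm ((x,y,t) - (x',y',t') :: real \<times> real \<times> real) \<le> \<bar>x-x'\<bar> + \<bar>y-y'\<bar> + \<bar>t-t'\<bar>"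
proof -
  have a: "norm ((x,y,t) - (x',y',t') :: real \<times> real \<times> real) = sqrt ((x-x')\<^sup>2 + (norm (y-y', t-t'))\<^sup>2)"
    by (simp add: norm_Pair)
  have b: "sqrt ((x-x')\<^sup>2 + (norm (y-y', t-t'))\<^sup>2) \<le> \<bar>x-x'\<bar> + \<bar>norm (y-y', t-t')\<bar>" by (rule sqrt_sum_squares_le_sum_abs)
  have c: "norm (y-y', t-t') = sqrt ((y-y')\<^sup>2 + (t-t')\<^sup>2)" by (simp add: norm_Pair)
  have d: "sqrt ((y-y')\<^sup>2 + (t-t')\<^sup>2) \<le> \<bar>y-y'\<bar> + \<bar>t-t'\<bar>" by (rule sqrt_sum_squares_le_sum_abs)
  have e: "\<bar>norm (y-y', t-t')\<bar> = norm (y-y', t-t')" by simp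
  show ?thesis using a b c d e by linarith
qed

lemma reg_coord:
  assumes "C1_SE2 f" "supported_in_disc (1/4) f"
  obtains B where "B \<ge> 0" "\<And>x y t x' y' t'. \<bar>f (x,y,t) - f (x',y',t')\<bar> \<le> B * (\<bar>x-x'\<bar> + \<bar>y-y'\<bar> + \<bar>t-t'\<bar>)"
proof -
  obtain B where B: "B \<ge> 0" "\<And>p q. norm (f p - f q) \<le> B * norm (p - q)" using regular[OF assms] by blast
  have "\<bar>f (x,y,t) - f (x',y',t')\<bar> \<le> B * (\<bar>x-x'\<bar> + \<bar>y-y'\<bar> + \<bar>t-t'\<bar>)" for x y t x' y' t'
    using B(2)[of "(x,y,t)" "(x',y',t')"] mult_left_mono[OF norm3_le B(1), of x y t x' y' t'] by simp
  then show ?thesis using that B(1) by blast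
qed

lemma bound_from_lip:
  assumes S: "supported_in_disc (1/4) f" and B: "B \<ge> 0"
    and L: "\<And>x y t x' y' t'. \<bar>f (x,y,t) - f (x',y',t')\<bar> \<le> B * (\<bar>x-x'\<bar> + \<bar>y-y'\<bar> + \<bar>t-t'\<bar>)"
  shows "\<bar>f p\<bar> \<le> 2 * B"
proof -
  obtain x y t where p: "p = (x,y,t)" by (cases p) auto
  show ?thesis
  proof (cases "f (x,y,t) = 0")
    case False
    then have x: "\<bar>x\<bar> < 1/4" using supp_small[OF S] by blast
    have "f (1,y,t) = 0" using supp_small(1)[OF S, of 1 y t] by force
    then have "\<bar>f (x,y,t)\<bar> \<le> B * \<bar>x - 1\<bar>" using L[of x y t 1 y t] by simp
    also have "\<dots> \<le> B * 2" using x B by (intro mult_left_mono) auto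
    finally show ?thesis by (simp add: p)
  qed (use B p in simp)
qed

lemma inv_le: "1 \<le> \<kappa> \<Longrightarrow> \<kappa> \<le> K \<Longrightarrow> 1 / real (2*K+1) \<le> 1 / real (\<kappa>::nat)"
  by (rule divide_left_mono) auto

theorem mainTheorem7:
  fixes f \<rho> :: se2fun
  assumes "C1_SE2 f" and "C1_SE2 \<rho>"
    and "supported_in_disc (1/4) f" and "supported_in_disc (1/4) \<rho>"
    and "radial_in_translations \<rho>"
  shows "\<exists>C > 0. \<forall>(K1::nat) (K2::nat) (K3::nat) (k1::int) (k2::int) (k3::int).
           K1 \<ge> 1 \<longrightarrow> K2 \<ge> 1 \<longrightarrow> K3 \<ge> 1 \<longrightarrow>
           \<bar>k1\<bar> \<le> int K1 \<longrightarrow> \<bar>k2\<bar> \<le> int K2 \<longrightarrow> \<bar>k3\<bar> \<le> int K3 \<longrightarrow>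
           cmod (dft_coeff (se2_conv f \<rho>) k1 k2 k3 (2*K1+1) (2*K2+1) (2*K3+1)
                 - dft_coeff f k1 k2 k3 (2*K1+1) (2*K2+1) (2*K3+1)
                   * dft_coeff \<rho> k1 k2 k3 (2*K1+1) (2*K2+1) (2*K3+1))
             \<le> C / real (min K1 (min K2 K3))"
proof -
  obtain Bf where Bf: "Bf \<ge> 0" "\<And>x y t x' y' t'. \<bar>f (x,y,t) - f (x',y',t')\<bar> \<le> Bf * (\<bar>x-x'\<bar> + \<bar>y-y'\<bar> + \<bar>t-t'\<bar>)"
    using reg_coord[OF assms(1,3)] by blast
  obtain Br where Br: "Br \<ge> 0" "\<And>x y t x' y' t'. \<bar>\<rho> (x,y,t) - \<rho> (x',y',t')\<bar> \<le> Br * (\<bar>x-x'\<bar> + \<bar>y-y'\<bar> + \<bar>t-t'\<bar>)"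
    using reg_coord[OF assms(2,4)] by blast
  define \<Lambda> where "\<Lambda> = max Bf Br"
  define M where "M = 2 * \<Lambda>"
  have L0: "\<Lambda> \<ge> 0" using Bf by (simp add: \<Lambda>_def)
  have fL: "\<bar>f (x,y,t) - f (x',y',t')\<bar> \<le> \<Lambda> * (\<bar>x-x'\<bar> + \<bar>y-y'\<bar> + \<bar>t-t'\<bar>)" for x y t x' y' t'
    using Bf(2)[of x y t x' y' t'] mult_right_mono[of Bf \<Lambda> "\<bar>x-x'\<bar> + \<bar>y-y'\<bar> + \<bar>t-t'\<bar>"]
    by (simp add: \<Lambda>_def)
  have rL: "\<bar>\<rho> (x,y,t) - \<rho> (x',y',t')\<bar> \<le> \<Lambda> * (\<bar>x-x'\<bar> + \<bar>y-y'\<bar> + \<bar>t-t'\<bar>)" for x y t x' y' t'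
    using Br(2)[of x y t x' y' t'] mult_right_mono[of Br \<Lambda> "\<bar>x-x'\<bar> + \<bar>y-y'\<bar> + \<bar>t-t'\<bar>"]
    by (simp add: \<Lambda>_def)
  have fM: "\<bar>f p\<bar> \<le> M" for p unfolding M_def by (rule bound_from_lip[OF assms(3) L0 fL])
  have rM: "\<bar>\<rho> p\<bar> \<le> M" for p unfolding M_def by (rule bound_from_lip[OF assms(4) L0 rL])
  have fS: "f (x,y,t) \<noteq> 0 \<Longrightarrow> \<bar>x\<bar> < 1/4 \<and> \<bar>y\<bar> < 1/4" for x y t using supp_small[OF assms(3)] by blast
  have rS: "\<rho> (x,y,t) \<noteq> 0 \<Longrightarrow> \<bar>x\<bar> < 1/4 \<and> \<bar>y\<bar> < 1/4" for x y t using supp_small[OF assms(4)] by blast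
  have rP: "\<rho> (x,y,t + 2 * pi) = \<rho> (x,y,t)" for x y t using assms(2) unfolding C1_SE2_def by blast
  have M0: "M \<ge> 0" using L0 by (simp add: M_def)
  have set: "setting f \<rho> M \<Lambda>"
    by (unfold_locales) (use M0 L0 fM rM fL rL fS rS rP assms(5) in auto)
  define C where "C = 2 * M * \<Lambda> * (2 + 2 * pi) + 3 * (M * \<Lambda>) + 1"
  have MLam: "M * \<Lambda> \<ge> 0" using M0 L0 by simp
  have "2 * M * \<Lambda> * (2 + 2 * pi) = (M * \<Lambda>) * (4 + 4 * pi)" by (simp add: algebra_simps)
  moreover have "(M * \<Lambda>) * (4 + 4 * pi) \<ge> 0" using MLam pi_gt_zero by simp
  ultimately have C0: "C > 0" unfolding C_def using MLam by linarith
  show ?thesis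
  proof (intro exI[of _ C] conjI allI impI C0)
    fix K1 K2 K3 :: nat and k1 k2 k3 :: int
    assume K1: "K1 \<ge> 1" and K2: "K2 \<ge> 1" and K3: "K3 \<ge> 1"
      and kb1: "\<bar>k1\<bar> \<le> int K1" and kb2: "\<bar>k2\<bar> \<le> int K2" and kb3: "\<bar>k3\<bar> \<le> int K3"
    have G: "grid f \<rho> M \<Lambda> K1 K2 K3"
      unfolding grid_def grid_axioms_def using set K1 K2 K3 by blast
    define \<kappa> where "\<kappa> = min K1 (min K2 K3)"
    have \<kappa>1: "\<kappa> \<ge> 1" using K1 K2 K3 by (simp add: \<kappa>_def)
    have i1: "1 / real (2*K1+1) \<le> 1 / real \<kappa>" by (rule inv_le[OF \<kappa>1]) (simp add: \<kappa>_def)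
    have i2: "1 / real (2*K2+1) \<le> 1 / real \<kappa>" by (rule inv_le[OF \<kappa>1]) (simp add: \<kappa>_def)
    have i3: "1 / real (2*K3+1) \<le> 1 / real \<kappa>" by (rule inv_le[OF \<kappa>1]) (simp add: \<kappa>_def)
    have main: "cmod (grid.D K1 K2 K3 k1 k2 k3 (se2_conv f \<rho>) - grid.D K1 K2 K3 k1 k2 k3 f * grid.D K1 K2 K3 k1 k2 k3 \<rho>) \<le>
     2 * M * \<Lambda> * (1 / real (2*K1+1) + 1 / real (2*K2+1) + 2 * pi / real (2*K3+1))
     + M * (\<Lambda> * (3 / (2 * real (2*K1+1)) + 3 / (2 * real (2*K2+1))))"
      by (rule grid.main_local[OF G kb1 kb2])
    have dft: "dft_coeff g k1 k2 k3 (2*K1+1) (2*K2+1) (2*K3+1) = grid.D K1 K2 K3 k1 k2 k3 g" for g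
      by (rule grid.dft_D[OF G])
    have "2 * M * \<Lambda> * (1 / real (2*K1+1) + 1 / real (2*K2+1) + 2 * pi / real (2*K3+1))
     + M * (\<Lambda> * (3 / (2 * real (2*K1+1)) + 3 / (2 * real (2*K2+1))))
     = 2 * (M * \<Lambda>) * (1 / real (2*K1+1) + 1 / real (2*K2+1) + 2 * pi * (1 / real (2*K3+1)))
     + (3/2) * (M * \<Lambda>) * (1 / real (2*K1+1) + 1 / real (2*K2+1))"
      by (simp add: algebra_simps)
    also have "\<dots> \<le> 2 * (M * \<Lambda>) * (1 / real \<kappa> + 1 / real \<kappa> + 2 * pi * (1 / real \<kappa>))
     + (3/2) * (M * \<Lambda>) * (1 / real \<kappa> + 1 / real \<kappa>)"
      using i1 i2 i3 MLam pi_gt_zero by (intro add_mono mult_left_mono) auto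
    also have "\<dots> = (C - 1) / real \<kappa>" unfolding C_def by (simp add: field_simps add_divide_distrib)
    also have "\<dots> \<le> C / real \<kappa>" using \<kappa>1 by (simp add: divide_right_mono)
    finally show "cmod (dft_coeff (se2_conv f \<rho>) k1 k2 k3 (2*K1+1) (2*K2+1) (2*K3+1)
                 - dft_coeff f k1 k2 k3 (2*K1+1) (2*K2+1) (2*K3+1)
                   * dft_coeff \<rho> k1 k2 k3 (2*K1+1) (2*K2+1) (2*K3+1))
             \<le> C / real (min K1 (min K2 K3))"
      unfolding dft \<kappa>_def[symmetric] using main by linarith
  qed
qed


end
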